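(* Let $N\ge3$, $G\in\mathcal G_3(N)$ and $u\in V(G)$. Then $u$ is not a leaf of $G$ if and only if $c(G|s)=\infty$ for every state $s=(x^1,\dots,x^{N-1},u,N)\in S^N\cap S_{nc}$ (robber on $u$, robber to move).
   Context: Board and moves: $G=(V,E)$ finite, simple, connected, undirected. There are $N\ge3$ tokens, cops $C_1,\dots,C_{N-1}$ (tokens $1,\dots,N-1$) and robber $R$ (token $N$). A state is $s=(x^1,\dots,x^N,n)$ with $x^i\in V$ the position of token $i$ and $n$ the token to move; $S^n$ is the set of states with token $n$ to move; $s$ is a capture state if $x^i=x^N$ for some $i\le N-1$, and $S_{nc}$ is the set of noncapture states. In each turn the token to move moves to a vertex of its closed neighbourhood (may stay put); order $C_1,\dots,C_{N-1},R,C_1,\dots$; the game ends at the first capture. The modified cops-and-robber (CR) game is the two-player zero-sum game where one player controls all cops, the other the robber, and if capture occurs at time $t$ (number of turns) the robber's payoff is $-\gamma^t$ ($0$ if never), $\gamma\in(0,1)$. $\widehat\Sigma^n$ denotes the set of pure positional strategies of token $n$ that are components of optimal strategies in this game (CR-optimal strategies). For $s\in S_{nc}$, whenever CR-optimal play from $s$ leads to capture, it is always the same cop, denoted $\widehat C(s)$, that effects it. State cop number. For $s\in S_{nc}$, $c(G|s)=c_N(G|s)$ is the minimum $k\in\{1,\dots,N-1\}$ for which there exist $k$ cops and strategies for them such that, starting from $s$, a capture (by any cop) occurs whatever the other $N-k$ tokens (including $R$) do; $c(G|s)=\infty$ if no such $k$ exists. $c(G)$ is the classical cop number of $G$. Graph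 classes. $\mathcal G(N)=\{G: c(G)>N-1\}$; $\mathcal G_1(N)=\{G\in\mathcal G(N):\exists s\in S_{nc}\text{ with } c(G|s)\in\{2,\dots,N-1\}\}$; $\mathcal G_1'(N)=\mathcal G(N)\setminus\mathcal G_1(N)$; $\mathcal G_2(N)=\{G\in\mathcal G(N): c(G|s)=\infty\text{ for all } s\in S^N\cap S_{nc}\}$; $\mathcal G_2'(N)=\mathcal G_1'(N)\setminus\mathcal G_2(N)$. Say that a state $s\in S_{nc}$ with $c(G|s)=1$ and $\widehat C(s)=C_m$ has the sure-capture property if for every $\widehat\sigma^m\in\widehat\Sigma^m$ and every strategy profile $\sigma^{-m}$ of the other tokens, play from $s$ under $(\widehat\sigma^m,\sigma^{-m})$ ends in a capture in which $C_m$ is on the robber's vertex. $\mathcal G_3(N)$ is the set of $G\in\mathcal G_2'(N)$ in which every $s\in S_{nc}$ with $c(G|s)=1$ has the sure-capture property. *)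

theory Defs
  imports Main "HOL-Library.Extended_Nat"
begin

definition simple_conn_graph :: "'v set \<Rightarrow> ('v \<Rightarrow> 'v \<Rightarrow> bool) \<Rightarrow> bool" where
  "simple_conn_graph V E \<longleftrightarrow> finite V \<and> V \<noteq> {} \<and>
     (\<forall>x y. E x y \<longrightarrow> x \<in> V \<and> y \<in> V) \<and>
     (\<forall>x y. E x y \<longrightarrow> E y x) \<and> (\<forall>x. \<not> E x x) \<and>
     (\<forall>x\<in>V. \<forall>y\<in>V. E\<^sup>*\<^sup>* x y)"

definition cnbhd :: "('v \<Rightarrow> 'v \<Rightarrow> bool) \<Rightarrow> 'v \<Rightarrow> 'v set" where
  "cnbhd E x = insert x {y. E x y}"

definition is_leaf :: "('v \<Rightarrow> 'v \<Rightarrow> bool) \<Rightarrow> 'v \<Rightarrow> bool" where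
  "is_leaf E u \<longleftrightarrow> card {v. E u v} = 1"

text \<open>k cops: cops place first (c0), the robber then places anywhere, then alternately all
  cops move simultaneously (history dependent strategy sigma) and the robber moves.\<close>

definition cops_win :: "'v set \<Rightarrow> ('v \<Rightarrow> 'v \<Rightarrow> bool) \<Rightarrow> nat \<Rightarrow> bool" where
  "cops_win V E k \<longleftrightarrow>
    (\<exists>c0 (\<sigma> :: ('v list \<times> 'v) list \<Rightarrow> 'v list).
       length c0 = k \<and> set c0 \<subseteq> V \<and>
       (\<forall>h. h \<noteq> [] \<longrightarrow> length (\<sigma> h) = length (fst (last h)) \<and>
             (\<forall>i < length (\<sigma> h). \<sigma> h ! i \<in> cnbhd E (fst (last h) ! i))) \<and>
       (\<forall>q :: nat \<Rightarrow> 'v list \<times> 'v.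
          fst (q 0) = c0 \<and> snd (q 0) \<in> V \<and>
          (\<forall>t. fst (q (Suc t)) = \<sigma> (map q [0..<Suc t]) \<and>
               snd (q (Suc t)) \<in> cnbhd E (snd (q t)))
          \<longrightarrow> (\<exists>t. snd (q t) \<in> set (fst (q t)) \<or> snd (q t) \<in> set (fst (q (Suc t))))))"

definition cop_number :: "'v set \<Rightarrow> ('v \<Rightarrow> 'v \<Rightarrow> bool) \<Rightarrow> nat" where
  "cop_number V E = (LEAST k. cops_win V E k)"

text \<open>A state is (xs, n): xs ! (i-1) is the position of token i (i = 1..N), n the token to move.
  Tokens 1..N-1 are the cops, token N is the robber.\<close>

type_synonym 'v state = "'v list \<times> nat"

definition pos :: "'v state \<Rightarrow> nat \<Rightarrow> 'v" where
  "pos s i = fst s ! (i - 1)"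

definition turn :: "'v state \<Rightarrow> nat" where
  "turn s = snd s"

definition valid_state :: "'v set \<Rightarrow> nat \<Rightarrow> 'v state \<Rightarrow> bool" where
  "valid_state V N s \<longleftrightarrow> length (fst s) = N \<and> set (fst s) \<subseteq> V \<and> snd s \<in> {1..N}"

definition is_capture :: "nat \<Rightarrow> 'v state \<Rightarrow> bool" where
  "is_capture N s \<longleftrightarrow> (\<exists>i\<in>{1..N-1}. pos s i = pos s N)"

definition S_nc :: "'v set \<Rightarrow> nat \<Rightarrow> 'v state set" where
  "S_nc V N = {s. valid_state V N s \<and> \<not> is_capture N s}"

definition S_turn :: "'v set \<Rightarrow> nat \<Rightarrow> nat \<Rightarrow> 'v state set" where
  "S_turn V N n = {s. valid_state V N s \<and> turn s = n}"

definition nxt :: "nat \<Rightarrow> nat \<Rightarrow> nat" where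
  "nxt N n = n mod N + 1"

definition move :: "nat \<Rightarrow> 'v state \<Rightarrow> 'v \<Rightarrow> 'v state" where
  "move N s y = ((fst s)[turn s - 1 := y], nxt N (turn s))"

text \<open>The cops in K (using history dependent strategies) force a capture from s against every
  behaviour of the other tokens.\<close>

definition can_force :: "'v set \<Rightarrow> ('v \<Rightarrow> 'v \<Rightarrow> bool) \<Rightarrow> nat \<Rightarrow> 'v state \<Rightarrow> nat set \<Rightarrow> bool" where
  "can_force V E N s K \<longleftrightarrow>
    (\<exists>\<sigma> :: 'v state list \<Rightarrow> 'v.
       (\<forall>h. h \<noteq> [] \<longrightarrow> \<sigma> h \<in> cnbhd E (pos (last h) (turn (last h)))) \<and>
       (\<forall>p :: nat \<Rightarrow> 'v state.
          p 0 = s \<and>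
          (\<forall>t. \<exists>y. y \<in> cnbhd E (pos (p t) (turn (p t))) \<and> p (Suc t) = move N (p t) y \<and>
                  (turn (p t) \<in> K \<longrightarrow> y = \<sigma> (map p [0..<Suc t])))
          \<longrightarrow> (\<exists>t. is_capture N (p t))))"

definition k_cops_force :: "'v set \<Rightarrow> ('v \<Rightarrow> 'v \<Rightarrow> bool) \<Rightarrow> nat \<Rightarrow> 'v state \<Rightarrow> nat \<Rightarrow> bool" where
  "k_cops_force V E N s k \<longleftrightarrow> k \<in> {1..N-1} \<and>
     (\<exists>K. K \<subseteq> {1..N-1} \<and> card K = k \<and> can_force V E N s K)"

definition state_cop_num :: "'v set \<Rightarrow> ('v \<Rightarrow> 'v \<Rightarrow> bool) \<Rightarrow> nat \<Rightarrow> 'v state \<Rightarrow> enat" where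
  "state_cop_num V E N s =
     (if \<exists>k. k_cops_force V E N s k then enat (LEAST k. k_cops_force V E N s k) else \<infinity>)"

definition legal_strat :: "'v set \<Rightarrow> ('v \<Rightarrow> 'v \<Rightarrow> bool) \<Rightarrow> nat \<Rightarrow> ('v state \<Rightarrow> 'v) \<Rightarrow> bool" where
  "legal_strat V E N \<sigma> \<longleftrightarrow> (\<forall>s. valid_state V N s \<longrightarrow> \<sigma> s \<in> cnbhd E (pos s (turn s)))"

primrec play :: "nat \<Rightarrow> ('v state \<Rightarrow> 'v) \<Rightarrow> 'v state \<Rightarrow> nat \<Rightarrow> 'v state" where
  "play N \<sigma> s 0 = s"
| "play N \<sigma> s (Suc t) = move N (play N \<sigma> s t) (\<sigma> (play N \<sigma> s t))"

definition robber_payoff :: "nat \<Rightarrow> real \<Rightarrow> ('v state \<Rightarrow> 'v) \<Rightarrow> 'v state \<Rightarrow> real" where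
  "robber_payoff N \<gamma> \<sigma> s =
     (if \<exists>t. is_capture N (play N \<sigma> s t)
      then - (\<gamma> ^ (LEAST t. is_capture N (play N \<sigma> s t))) else 0)"

definition mix :: "nat set \<Rightarrow> ('v state \<Rightarrow> 'v) \<Rightarrow> ('v state \<Rightarrow> 'v) \<Rightarrow> 'v state \<Rightarrow> 'v" where
  "mix P \<sigma> \<tau> = (\<lambda>s. if turn s \<in> P then \<sigma> s else \<tau> s)"

text \<open>Optimal (saddle point, from every state) profiles: robber (token N) maximises, the cops
  (tokens 1..N-1, one player) minimise the robber payoff.\<close>

definition CR_optimal :: "'v set \<Rightarrow> ('v \<Rightarrow> 'v \<Rightarrow> bool) \<Rightarrow> nat \<Rightarrow> real \<Rightarrow> ('v state \<Rightarrow> 'v) \<Rightarrow> bool" where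
  "CR_optimal V E N \<gamma> \<sigma> \<longleftrightarrow> legal_strat V E N \<sigma> \<and>
     (\<forall>s. valid_state V N s \<longrightarrow>
        (\<forall>\<tau>. legal_strat V E N \<tau> \<longrightarrow>
           robber_payoff N \<gamma> (mix {N} \<tau> \<sigma>) s \<le> robber_payoff N \<gamma> \<sigma> s \<and>
           robber_payoff N \<gamma> \<sigma> s \<le> robber_payoff N \<gamma> (mix {N} \<sigma> \<tau>) s))"

text \<open>hat Sigma^m: positional strategies of token m (only values on states with m to move
  matter) that are components of CR-optimal profiles.\<close>

definition hat_Sigma :: "'v set \<Rightarrow> ('v \<Rightarrow> 'v \<Rightarrow> bool) \<Rightarrow> nat \<Rightarrow> real \<Rightarrow> nat \<Rightarrow> ('v state \<Rightarrow> 'v) set" where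
  "hat_Sigma V E N \<gamma> m = {\<sigma>m. \<exists>\<sigma>. CR_optimal V E N \<gamma> \<sigma> \<and>
       (\<forall>s. valid_state V N s \<and> turn s = m \<longrightarrow> \<sigma>m s = \<sigma> s)}"

text \<open>hat C(s) = C_m: CR-optimal play from s ends in a capture effected by cop m
  (m made the capturing move).\<close>

definition hat_C :: "'v set \<Rightarrow> ('v \<Rightarrow> 'v \<Rightarrow> bool) \<Rightarrow> nat \<Rightarrow> real \<Rightarrow> 'v state \<Rightarrow> nat \<Rightarrow> bool" where
  "hat_C V E N \<gamma> s m \<longleftrightarrow> m \<in> {1..N-1} \<and>
     (\<exists>\<sigma> t. CR_optimal V E N \<gamma> \<sigma> \<and> 0 < t \<and> is_capture N (play N \<sigma> s t) \<and>
        (\<forall>t'<t. \<not> is_capture N (play N \<sigma> s t')) \<and> turn (play N \<sigma> s (t - 1)) = m)"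

definition sure_capture :: "'v set \<Rightarrow> ('v \<Rightarrow> 'v \<Rightarrow> bool) \<Rightarrow> nat \<Rightarrow> real \<Rightarrow> 'v state \<Rightarrow> bool" where
  "sure_capture V E N \<gamma> s \<longleftrightarrow>
     (\<forall>m. hat_C V E N \<gamma> s m \<longrightarrow>
        (\<forall>\<sigma>m \<in> hat_Sigma V E N \<gamma> m. \<forall>\<tau>. legal_strat V E N \<tau> \<longrightarrow>
           (\<exists>t. is_capture N (play N (mix {m} \<sigma>m \<tau>) s t) \<and>
                (\<forall>t'<t. \<not> is_capture N (play N (mix {m} \<sigma>m \<tau>) s t')) \<and>
                pos (play N (mix {m} \<sigma>m \<tau>) s t) m = pos (play N (mix {m} \<sigma>m \<tau>) s t) N)))"

definition in_G :: "'v set \<Rightarrow> ('v \<Rightarrow> 'v \<Rightarrow> bool) \<Rightarrow> nat \<Rightarrow> bool" where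
  "in_G V E N \<longleftrightarrow> cop_number V E > N - 1"

definition in_G1 :: "'v set \<Rightarrow> ('v \<Rightarrow> 'v \<Rightarrow> bool) \<Rightarrow> nat \<Rightarrow> bool" where
  "in_G1 V E N \<longleftrightarrow> in_G V E N \<and>
     (\<exists>s \<in> S_nc V N. state_cop_num V E N s \<in> enat ` {2..N-1})"

definition in_G1' :: "'v set \<Rightarrow> ('v \<Rightarrow> 'v \<Rightarrow> bool) \<Rightarrow> nat \<Rightarrow> bool" where
  "in_G1' V E N \<longleftrightarrow> in_G V E N \<and> \<not> in_G1 V E N"

definition in_G2 :: "'v set \<Rightarrow> ('v \<Rightarrow> 'v \<Rightarrow> bool) \<Rightarrow> nat \<Rightarrow> bool" where
  "in_G2 V E N \<longleftrightarrow> in_G V E N \<and>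
     (\<forall>s \<in> S_turn V N N \<inter> S_nc V N. state_cop_num V E N s = \<infinity>)"

definition in_G2' :: "'v set \<Rightarrow> ('v \<Rightarrow> 'v \<Rightarrow> bool) \<Rightarrow> nat \<Rightarrow> bool" where
  "in_G2' V E N \<longleftrightarrow> in_G1' V E N \<and> \<not> in_G2 V E N"

definition in_G3 :: "'v set \<Rightarrow> ('v \<Rightarrow> 'v \<Rightarrow> bool) \<Rightarrow> nat \<Rightarrow> real \<Rightarrow> bool" where
  "in_G3 V E N \<gamma> \<longleftrightarrow> in_G2' V E N \<and>
     (\<forall>s \<in> S_nc V N. state_cop_num V E N s = 1 \<longrightarrow> sure_capture V E N \<gamma> s)"

end

theory Submission
  imports Defs
begin

primrec Att :: "('v \<Rightarrow> 'v \<Rightarrow> bool) \<Rightarrow> nat \<Rightarrow> nat set \<Rightarrow> nat \<Rightarrow> 'v state set" where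
  "Att E N K 0 = {s. is_capture N s}"
| "Att E N K (Suc n) = Att E N K n \<union> {s.
     (turn s \<in> K \<and> (\<exists>y\<in>cnbhd E (pos s (turn s)). move N s y \<in> Att E N K n)) \<or>
     (turn s \<notin> K \<and> (\<forall>y\<in>cnbhd E (pos s (turn s)). move N s y \<in> Att E N K n))}"

lemma Att_Suc_mono: "Att E N K n \<subseteq> Att E N K (Suc n)" by auto

lemma Att_mono: "n \<le> n' \<Longrightarrow> Att E N K n \<subseteq> Att E N K n'"
  using lift_Suc_mono_le[of "Att E N K", OF Att_Suc_mono] by blast

lemma Att_K_step: "turn s \<in> K \<Longrightarrow> y \<in> cnbhd E (pos s (turn s)) \<Longrightarrow> move N s y \<in> Att E N K k
   \<Longrightarrow> s \<in> Att E N K (Suc k)" by auto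

lemma Att_nK_step: "turn s \<notin> K \<Longrightarrow> (\<forall>y\<in>cnbhd E (pos s (turn s)). move N s y \<in> Att E N K k)
   \<Longrightarrow> s \<in> Att E N K (Suc k)" by auto

lemma Att_nK_down: "s \<in> Att E N K (Suc k) \<Longrightarrow> \<not> is_capture N s \<Longrightarrow> turn s \<notin> K
   \<Longrightarrow> y \<in> cnbhd E (pos s (turn s)) \<Longrightarrow> move N s y \<in> Att E N K k"
proof (induction k arbitrary: s)
  case 0 then show ?case by auto
next
  case (Suc k)
  then have "s \<in> Att E N K (Suc k) \<or> (\<forall>y\<in>cnbhd E (pos s (turn s)). move N s y \<in> Att E N K (Suc k))"
    by auto
  then show ?case
  proof
    assume "s \<in> Att E N K (Suc k)"
    then have "move N s y \<in> Att E N K k" using Suc by blast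
    then show ?thesis by auto
  qed (use Suc in blast)
qed

lemma Att_K_down: "s \<in> Att E N K (Suc k) \<Longrightarrow> \<not> is_capture N s \<Longrightarrow> turn s \<in> K
   \<Longrightarrow> \<exists>y\<in>cnbhd E (pos s (turn s)). move N s y \<in> Att E N K k"
proof (induction k arbitrary: s)
  case 0 then show ?case by auto
next
  case (Suc k)
  then have "s \<in> Att E N K (Suc k) \<or> (\<exists>y\<in>cnbhd E (pos s (turn s)). move N s y \<in> Att E N K (Suc k))"
    by auto
  then show ?case
  proof
    assume "s \<in> Att E N K (Suc k)"
    then obtain y where "y\<in>cnbhd E (pos s (turn s))" "move N s y \<in> Att E N K k" using Suc by blast
    then show ?thesis by auto
  qed
qed

lemma pigeon_Att:
  assumes "finite Y" "\<forall>y\<in>Y. \<exists>k. g y \<in> Att E N K k"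
  shows "\<exists>k. \<forall>y\<in>Y. g y \<in> Att E N K k"
proof -
  obtain f where f: "\<forall>y\<in>Y. g y \<in> Att E N K (f y)" using bchoice[OF assms(2)] by blast
  have "\<forall>y\<in>Y. g y \<in> Att E N K (\<Sum>y\<in>Y. f y)"
  proof
    fix y assume "y \<in> Y"
    then have "f y \<le> (\<Sum>y\<in>Y. f y)" using assms(1) by (simp add: member_le_sum)
    then show "g y \<in> Att E N K (\<Sum>y\<in>Y. f y)" using f \<open>y\<in>Y\<close> Att_mono[of "f y" "\<Sum>y\<in>Y. f y" E N K] by blast
  qed
  then show ?thesis by blast
qed

lemma fin_cnbhd: "simple_conn_graph V E \<Longrightarrow> finite (cnbhd E x)"
proof -
  assume a: "simple_conn_graph V E"
  then have "{y. E x y} \<subseteq> V" "finite V" unfolding simple_conn_graph_def by blast+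
  then have "finite {y. E x y}" using finite_subset by blast
  then show ?thesis unfolding cnbhd_def by simp
qed

lemma notAtt_nK:
  assumes "finite (cnbhd E (pos s (turn s)))" "turn s \<notin> K" "\<forall>n. s \<notin> Att E N K n"
  shows "\<exists>y\<in>cnbhd E (pos s (turn s)). \<forall>n. move N s y \<notin> Att E N K n"
proof (rule ccontr)
  assume "\<not> ?thesis"
  then have "\<forall>y\<in>cnbhd E (pos s (turn s)). \<exists>k. move N s y \<in> Att E N K k" by blast
  then obtain k where "\<forall>y\<in>cnbhd E (pos s (turn s)). move N s y \<in> Att E N K k"
    using pigeon_Att[OF assms(1)] by blast
  then have "s \<in> Att E N K (Suc k)" using assms(2) by auto
  then show False using assms(3) by blast
qed

lemma notAtt_K:
  assumes "turn s \<in> K" "\<forall>n. s \<notin> Att E N K n" "y \<in> cnbhd E (pos s (turn s))"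
  shows "\<forall>n. move N s y \<notin> Att E N K n"
proof
  fix n show "move N s y \<notin> Att E N K n"
  proof
    assume "move N s y \<in> Att E N K n"
    then have "s \<in> Att E N K (Suc n)" using Att_K_step[OF assms(1,3)] by blast
    then show False using assms(2) by blast
  qed
qed

lemma force_Att:
  assumes fin: "\<forall>x. finite (cnbhd E x)" and cf: "can_force V E N s K"
  shows "\<exists>n. s \<in> Att E N K n"
proof (rule ccontr)
  assume nin: "\<not> ?thesis"
  obtain \<sigma> where \<sigma>leg: "\<forall>h. h \<noteq> [] \<longrightarrow> \<sigma> h \<in> cnbhd E (pos (last h) (turn (last h)))"
    and \<sigma>win: "\<forall>p :: nat \<Rightarrow> 'a state. p 0 = s \<and>
          (\<forall>t. \<exists>y. y \<in> cnbhd E (pos (p t) (turn (p t))) \<and> p (Suc t) = move N (p t) y \<and>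
                  (turn (p t) \<in> K \<longrightarrow> y = \<sigma> (map p [0..<Suc t])))
          \<longrightarrow> (\<exists>t. is_capture N (p t))"
    using cf unfolding can_force_def by blast
  define ch where "ch h = (if turn (last h) \<in> K then \<sigma> h else
     (SOME y. y \<in> cnbhd E (pos (last h) (turn (last h))) \<and> (\<forall>n. move N (last h) y \<notin> Att E N K n)))"
    for h :: "'a state list"
  define H where "H = rec_nat [s] (\<lambda>t h. h @ [move N (last h) (ch h)])"
  define p where "p t = last (H t)" for t
  have H0: "H 0 = [s]" unfolding H_def by simp
  have Hsuc: "H (Suc t) = H t @ [move N (p t) (ch (H t))]" for t
    unfolding H_def p_def by simp
  have Hmap: "H t = map p [0..<Suc t]" for t
  proof (induction t)
    case 0 then show ?case using H0 p_def by simp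
  next
    case (Suc t)
    have "p (Suc t) = move N (p t) (ch (H t))" using Hsuc p_def by simp
    then show ?case using Suc Hsuc by simp
  qed
  have Hne: "H t \<noteq> []" for t using Hmap[of t] by simp
  have lastH: "last (H t) = p t" for t using p_def by simp
  have step: "ch (H t) \<in> cnbhd E (pos (p t) (turn (p t))) \<and> (\<forall>n. p (Suc t) \<notin> Att E N K n)"
    if "\<forall>n. p t \<notin> Att E N K n" for t
  proof (cases "turn (p t) \<in> K")
    case True
    then have "ch (H t) = \<sigma> (H t)" using lastH ch_def by simp
    then have c: "ch (H t) \<in> cnbhd E (pos (p t) (turn (p t)))" using \<sigma>leg Hne lastH by metis
    have "p (Suc t) = move N (p t) (ch (H t))" using Hsuc p_def by simp
    then show ?thesis using notAtt_K[OF True that c] c by simp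
  next
    case False
    have ex: "\<exists>y. y \<in> cnbhd E (pos (p t) (turn (p t))) \<and> (\<forall>n. move N (p t) y \<notin> Att E N K n)"
      using notAtt_nK[OF _ False that] fin by blast
    have "ch (H t) = (SOME y. y \<in> cnbhd E (pos (p t) (turn (p t))) \<and> (\<forall>n. move N (p t) y \<notin> Att E N K n))"
      using False lastH ch_def by simp
    then have c: "ch (H t) \<in> cnbhd E (pos (p t) (turn (p t))) \<and> (\<forall>n. move N (p t) (ch (H t)) \<notin> Att E N K n)"
      using someI_ex[OF ex] by simp
    have "p (Suc t) = move N (p t) (ch (H t))" using Hsuc p_def by simp
    then show ?thesis using c by simp
  qed
  have inv: "\<forall>n. p t \<notin> Att E N K n" for t
  proof (induction t)
    case 0 then show ?case using nin p_def H0 by simp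
  next
    case (Suc t) then show ?case using step by blast
  qed
  have "p 0 = s" using p_def H0 by simp
  moreover have "\<forall>t. \<exists>y. y \<in> cnbhd E (pos (p t) (turn (p t))) \<and> p (Suc t) = move N (p t) y \<and>
                  (turn (p t) \<in> K \<longrightarrow> y = \<sigma> (map p [0..<Suc t]))"
  proof
    fix t
    have "p (Suc t) = move N (p t) (ch (H t))" using Hsuc p_def by simp
    moreover have "turn (p t) \<in> K \<longrightarrow> ch (H t) = \<sigma> (map p [0..<Suc t])"
      using lastH ch_def Hmap by simp
    ultimately show "\<exists>y. y \<in> cnbhd E (pos (p t) (turn (p t))) \<and> p (Suc t) = move N (p t) y \<and>
                  (turn (p t) \<in> K \<longrightarrow> y = \<sigma> (map p [0..<Suc t]))"
      using step[OF inv[of t]] by blast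
  qed
  ultimately obtain t where "is_capture N (p t)" using \<sigma>win by blast
  then have "p t \<in> Att E N K 0" by simp
  then show False using inv by blast
qed

lemma turn_move[simp]: "turn (move N s y) = nxt N (turn s)"
  unfolding move_def turn_def by simp

lemma fst_move: "fst (move N s y) = (fst s)[turn s - 1 := y]"
  unfolding move_def by simp

lemma pos_move: "1 \<le> i \<Longrightarrow> 1 \<le> turn s \<Longrightarrow> i \<le> length (fst s) \<Longrightarrow> turn s \<le> length (fst s) \<Longrightarrow>
   pos (move N s y) i = (if i = turn s then y else pos s i)"
  unfolding pos_def fst_move by (auto simp: nth_list_update)

lemma nxt_range: "0 < N \<Longrightarrow> nxt N n \<in> {1..N}"
  unfolding nxt_def by (simp add: Suc_leI)

lemma cnbhd_V: "simple_conn_graph V E \<Longrightarrow> x \<in> V \<Longrightarrow> cnbhd E x \<subseteq> V"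
  unfolding simple_conn_graph_def cnbhd_def by blast

lemma valid_pos: "valid_state V N s \<Longrightarrow> i \<in> {1..N} \<Longrightarrow> pos s i \<in> V"
  unfolding valid_state_def pos_def by (auto intro!: nth_mem[THEN subsetD[rotated]])

lemma valid_turn: "valid_state V N s \<Longrightarrow> turn s \<in> {1..N}"
  unfolding valid_state_def turn_def by simp

lemma valid_move: "valid_state V N s \<Longrightarrow> y \<in> V \<Longrightarrow> valid_state V N (move N s y)"
  unfolding valid_state_def move_def using nxt_range[of N]
  by (auto dest: set_update_subset_insert[THEN subsetD])

lemma valid_move_cn: "simple_conn_graph V E \<Longrightarrow> valid_state V N s
  \<Longrightarrow> y \<in> cnbhd E (pos s (turn s)) \<Longrightarrow> valid_state V N (move N s y)"
  using valid_move cnbhd_V valid_pos valid_turn by (metis subsetD)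

lemma play_valid: "simple_conn_graph V E \<Longrightarrow> valid_state V N s \<Longrightarrow> legal_strat V E N \<rho>
   \<Longrightarrow> valid_state V N (play N \<rho> s t)"
proof (induction t)
  case (Suc t)
  have "\<rho> (play N \<rho> s t) \<in> cnbhd E (pos (play N \<rho> s t) (turn (play N \<rho> s t)))"
    using Suc.prems(3) Suc.IH[OF Suc.prems] unfolding legal_strat_def by blast
  then show ?case using valid_move_cn[of V E N "play N \<rho> s t"] Suc by simp
qed simp

lemma play_step: "legal_strat V E N \<rho> \<Longrightarrow> valid_state V N (play N \<rho> s t) \<Longrightarrow>
   \<rho> (play N \<rho> s t) \<in> cnbhd E (pos (play N \<rho> s t) (turn (play N \<rho> s t)))"
  unfolding legal_strat_def by blast

lemma payoff_cap:
  assumes "is_capture N (play N \<rho> s t)" "\<forall>t'<t. \<not> is_capture N (play N \<rho> s t')"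
  shows "robber_payoff N \<gamma> \<rho> s = - (\<gamma> ^ t)"
proof -
  have "(LEAST t. is_capture N (play N \<rho> s t)) = t"
    using assms by (metis (mono_tags, lifting) Least_equality not_le_imp_less)
  then show ?thesis using assms unfolding robber_payoff_def by auto
qed

lemma payoff_nocap: "\<forall>t. \<not> is_capture N (play N \<rho> s t) \<Longrightarrow> robber_payoff N \<gamma> \<rho> s = 0"
  unfolding robber_payoff_def by auto

lemma payoff_first:
  assumes "\<exists>t. is_capture N (play N \<rho> s t)"
  obtains t where "is_capture N (play N \<rho> s t)" "\<forall>t'<t. \<not> is_capture N (play N \<rho> s t')"
    "robber_payoff N \<gamma> \<rho> s = - (\<gamma> ^ t)"
proof -
  define t where "t = (LEAST t. is_capture N (play N \<rho> s t))"
  have "is_capture N (play N \<rho> s t)" using assms LeastI_ex t_def by metis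
  moreover have "\<forall>t'<t. \<not> is_capture N (play N \<rho> s t')" using not_less_Least t_def by blast
  ultimately show ?thesis using that payoff_cap by blast
qed

lemma payoff_le0: "0 \<le> \<gamma> \<Longrightarrow> robber_payoff N \<gamma> \<rho> s \<le> 0"
  unfolding robber_payoff_def by auto

section \<open>Existence of CR-optimal strategies\<close>

definition FinS :: "('v \<Rightarrow> 'v \<Rightarrow> bool) \<Rightarrow> nat \<Rightarrow> 'v state set" where
  "FinS E N = {s. \<exists>n. s \<in> Att E N {1..N-1} n}"

definition rk :: "('v \<Rightarrow> 'v \<Rightarrow> bool) \<Rightarrow> nat \<Rightarrow> 'v state \<Rightarrow> nat" where
  "rk E N s = (LEAST n. s \<in> Att E N {1..N-1} n)"

definition Good :: "('v \<Rightarrow> 'v \<Rightarrow> bool) \<Rightarrow> nat \<Rightarrow> 'v state \<Rightarrow> 'v \<Rightarrow> bool" where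
  "Good E N s y \<longleftrightarrow> is_capture N s \<or>
     (s \<in> FinS E N \<and> move N s y \<in> FinS E N \<and> rk E N (move N s y) + 1 = rk E N s) \<or>
     (s \<notin> FinS E N \<and> move N s y \<notin> FinS E N)"

definition optS :: "('v \<Rightarrow> 'v \<Rightarrow> bool) \<Rightarrow> nat \<Rightarrow> 'v state \<Rightarrow> 'v" where
  "optS E N s = (SOME y. y \<in> cnbhd E (pos s (turn s)) \<and> Good E N s y)"

lemma rk_Att: "s \<in> FinS E N \<Longrightarrow> s \<in> Att E N {1..N-1} (rk E N s)"
  unfolding FinS_def rk_def by (auto intro: LeastI_ex)

lemma rk_le: "s \<in> Att E N {1..N-1} n \<Longrightarrow> rk E N s \<le> n"
  unfolding rk_def by (rule Least_le)

lemma Fin_I: "s \<in> Att E N {1..N-1} n \<Longrightarrow> s \<in> FinS E N"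
  unfolding FinS_def by blast

lemma cap_Fin: "is_capture N s \<Longrightarrow> s \<in> FinS E N \<and> rk E N s = 0"
  using Fin_I[of s E N 0] rk_le[of s E N 0] by simp

lemma rk0_cap: "s \<in> FinS E N \<Longrightarrow> rk E N s = 0 \<Longrightarrow> is_capture N s"
  using rk_Att[of s E N] by simp

lemma cnbhd_self: "x \<in> cnbhd E x" unfolding cnbhd_def by simp

lemma good_ex:
  assumes fin: "\<forall>x. finite (cnbhd E x)"
  shows "\<exists>y. y \<in> cnbhd E (pos s (turn s)) \<and> Good E N s y"
proof (cases "is_capture N s")
  case True
  then have "Good E N s (pos s (turn s))" unfolding Good_def by blast
  then show ?thesis using cnbhd_self[of "pos s (turn s)" E] by blast
next
  case nc: False
  let ?K = "{1..N-1}"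
  let ?x = "pos s (turn s)"
  show ?thesis
  proof (cases "s \<in> FinS E N")
    case F: True
    have r1: "rk E N s \<noteq> 0" using rk0_cap[OF F] nc by blast
    then obtain k where k: "rk E N s = Suc k" using not0_implies_Suc by blast
    have sA: "s \<in> Att E N ?K (Suc k)" using rk_Att[OF F] k by simp
    show ?thesis
    proof (cases "turn s \<in> ?K")
      case True
      obtain y where y: "y \<in> cnbhd E ?x" "move N s y \<in> Att E N ?K k"
        using Att_K_down[OF sA nc True] by blast
      have mF: "move N s y \<in> FinS E N" using Fin_I[OF y(2)] .
      have "rk E N (move N s y) \<le> k" using rk_le[OF y(2)] .
      moreover have "s \<in> Att E N ?K (Suc (rk E N (move N s y)))"
        using Att_K_step[OF True y(1) rk_Att[OF mF]] .
      then have "rk E N s \<le> Suc (rk E N (move N s y))" by (rule rk_le)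
      ultimately have "rk E N (move N s y) + 1 = rk E N s" using k by simp
      then have "Good E N s y" using F mF unfolding Good_def by blast
      then show ?thesis using y(1) by blast
    next
      case False
      have all: "\<forall>y\<in>cnbhd E ?x. move N s y \<in> Att E N ?K k"
        using Att_nK_down[OF sA nc False] by blast
      show ?thesis
      proof (rule ccontr)
        assume "\<not> ?thesis"
        then have ng: "\<forall>y\<in>cnbhd E ?x. \<not> Good E N s y" by blast
        have lt: "\<forall>y\<in>cnbhd E ?x. rk E N (move N s y) < k"
        proof
          fix y assume y: "y \<in> cnbhd E ?x"
          have mA: "move N s y \<in> Att E N ?K k" using all y by blast
          have mF: "move N s y \<in> FinS E N" using Fin_I[OF mA] .
          have "rk E N (move N s y) \<le> k" using rk_le[OF mA] .
          moreover have "rk E N (move N s y) + 1 \<noteq> rk E N s" using ng y F mF unfolding Good_def by blast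
          ultimately show "rk E N (move N s y) < k" using k by simp
        qed
        have "rk E N (move N s ?x) < k" using lt cnbhd_self[of "pos s (turn s)" E] by blast
        then obtain k' where k': "k = Suc k'" using not0_implies_Suc by fastforce
        have "\<forall>y\<in>cnbhd E ?x. move N s y \<in> Att E N ?K k'"
        proof
          fix y assume y: "y \<in> cnbhd E ?x"
          then have "move N s y \<in> Att E N ?K k" using all by blast
          then have "move N s y \<in> FinS E N" by (rule Fin_I)
          then have "move N s y \<in> Att E N ?K (rk E N (move N s y))" by (rule rk_Att)
          moreover have "rk E N (move N s y) \<le> k'" using lt y k' by fastforce
          ultimately show "move N s y \<in> Att E N ?K k'" using Att_mono[of "rk E N (move N s y)" k' E N ?K] by blast
        qed
        then have "s \<in> Att E N ?K (Suc k')" using Att_nK_step[OF False] by blast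
        then have "rk E N s \<le> k" using rk_le[of s E N "Suc k'"] k' by simp
        then show False using k by simp
      qed
    qed
  next
    case NF: False
    then have nA: "\<forall>n. s \<notin> Att E N ?K n" unfolding FinS_def by blast
    show ?thesis
    proof (cases "turn s \<in> ?K")
      case True
      have "\<forall>n. move N s ?x \<notin> Att E N ?K n" using notAtt_K[OF True nA cnbhd_self] .
      then have "move N s ?x \<notin> FinS E N" unfolding FinS_def by blast
      then have "Good E N s ?x" using NF unfolding Good_def by blast
      then show ?thesis using cnbhd_self[of "pos s (turn s)" E] by blast
    next
      case False
      obtain y where "y \<in> cnbhd E ?x" "\<forall>n. move N s y \<notin> Att E N ?K n"
        using notAtt_nK[OF _ False nA] fin by blast
      then have "y \<in> cnbhd E ?x" "move N s y \<notin> FinS E N" unfolding FinS_def by blast+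
      then show ?thesis using NF unfolding Good_def by blast
    qed
  qed
qed

lemma optS_spec: "\<forall>x. finite (cnbhd E x) \<Longrightarrow>
   optS E N s \<in> cnbhd E (pos s (turn s)) \<and> Good E N s (optS E N s)"
  unfolding optS_def using someI_ex[OF good_ex] by blast

lemma legal_optS: "\<forall>x. finite (cnbhd E x) \<Longrightarrow> legal_strat V E N (optS E N)"
  unfolding legal_strat_def using optS_spec by blast

lemma legal_mix: "legal_strat V E N \<sigma> \<Longrightarrow> legal_strat V E N \<tau> \<Longrightarrow> legal_strat V E N (mix P \<sigma> \<tau>)"
  unfolding legal_strat_def mix_def by simp

lemma play_Suc: "play N \<rho> s (Suc t) = move N (play N \<rho> s t) (\<rho> (play N \<rho> s t))" by simp

lemma opt_play_Fin:
  assumes fin: "\<forall>x. finite (cnbhd E x)" and F: "s \<in> FinS E N"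
  shows "t \<le> rk E N s \<Longrightarrow> play N (optS E N) s t \<in> FinS E N \<and> rk E N (play N (optS E N) s t) + t = rk E N s"
proof (induction t)
  case 0 then show ?case using F by simp
next
  case (Suc t)
  let ?q = "play N (optS E N) s t"
  have IH: "?q \<in> FinS E N" "rk E N ?q + t = rk E N s" using Suc by auto
  then have "rk E N ?q \<noteq> 0" using Suc.prems by simp
  then have nc: "\<not> is_capture N ?q" using cap_Fin[of N ?q E] by auto
  have "Good E N ?q (optS E N ?q)" using optS_spec[OF fin] by blast
  then have "move N ?q (optS E N ?q) \<in> FinS E N \<and> rk E N (move N ?q (optS E N ?q)) + 1 = rk E N ?q"
    using nc IH unfolding Good_def by blast
  then show ?case using IH by simp
qed

lemma opt_play_nFin:
  assumes fin: "\<forall>x. finite (cnbhd E x)" and F: "s \<notin> FinS E N"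
  shows "play N (optS E N) s t \<notin> FinS E N"
proof (induction t)
  case 0 then show ?case using F by simp
next
  case (Suc t)
  let ?q = "play N (optS E N) s t"
  have nc: "\<not> is_capture N ?q" using cap_Fin[of N ?q E] Suc by blast
  have "Good E N ?q (optS E N ?q)" using optS_spec[OF fin] by blast
  then show ?case using nc Suc unfolding Good_def by simp
qed

lemma opt_payoff:
  assumes fin: "\<forall>x. finite (cnbhd E x)"
  shows "robber_payoff N \<gamma> (optS E N) s = (if s \<in> FinS E N then - (\<gamma> ^ rk E N s) else 0)"
proof (cases "s \<in> FinS E N")
  case True
  let ?r = "rk E N s"
  have "play N (optS E N) s ?r \<in> FinS E N \<and> rk E N (play N (optS E N) s ?r) = 0"
    using opt_play_Fin[OF fin True, of ?r] by simp
  then have c: "is_capture N (play N (optS E N) s ?r)" using rk0_cap by blast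
  have "\<forall>t'<?r. \<not> is_capture N (play N (optS E N) s t')"
  proof (intro allI impI)
    fix t' assume "t' < ?r"
    then have "rk E N (play N (optS E N) s t') \<noteq> 0" using opt_play_Fin[OF fin True, of t'] by simp
    then show "\<not> is_capture N (play N (optS E N) s t')" using cap_Fin[of N "play N (optS E N) s t'" E] by auto
  qed
  then show ?thesis using payoff_cap[OF c] True by simp
next
  case False
  have "\<forall>t. \<not> is_capture N (play N (optS E N) s t)"
    using opt_play_nFin[OF fin False] cap_Fin[of N _ E] by blast
  then show ?thesis using payoff_nocap False by simp
qed

lemma rob_dev:
  assumes G: "simple_conn_graph V E" and v: "valid_state V N s" and \<tau>: "legal_strat V E N \<tau>"
    and F: "s \<in> FinS E N"
  shows "\<exists>t \<le> rk E N s. is_capture N (play N (mix {N} \<tau> (optS E N)) s t)"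
proof -
  have fin: "\<forall>x. finite (cnbhd E x)" using fin_cnbhd[OF G] by blast
  let ?\<rho> = "mix {N} \<tau> (optS E N)"
  let ?q = "play N ?\<rho> s"
  have leg: "legal_strat V E N ?\<rho>" using legal_mix[OF \<tau> legal_optS[OF fin]] .
  have inv: "(\<exists>t'\<le>t. is_capture N (?q t')) \<or> (?q t \<in> FinS E N \<and> rk E N (?q t) + t \<le> rk E N s)" for t
  proof (induction t)
    case 0 then show ?case using F by simp
  next
    case (Suc t)
    show ?case
    proof (cases "\<exists>t'\<le>t. is_capture N (?q t')")
      case True then show ?thesis using le_Suc_eq by blast
    next
      case False
      then have nc: "\<not> is_capture N (?q t)" by blast
      have IH: "?q t \<in> FinS E N" "rk E N (?q t) + t \<le> rk E N s" using Suc False by auto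
      have vq: "valid_state V N (?q t)" using play_valid[OF G v leg] .
      have "rk E N (?q t) \<noteq> 0" using rk0_cap[OF IH(1)] nc by blast
      then obtain k where k: "rk E N (?q t) = Suc k" using not0_implies_Suc by blast
      have qA: "?q t \<in> Att E N {1..N-1} (Suc k)" using rk_Att[OF IH(1)] k by simp
      have qs: "?q (Suc t) = move N (?q t) (?\<rho> (?q t))" by simp
      show ?thesis
      proof (cases "turn (?q t) = N")
        case True
        have r: "?\<rho> (?q t) = \<tau> (?q t)" using True unfolding mix_def by simp
        have y: "\<tau> (?q t) \<in> cnbhd E (pos (?q t) (turn (?q t)))" using \<tau> vq unfolding legal_strat_def by blast
        have nK: "turn (?q t) \<notin> {1..N-1}" using True valid_turn[OF vq] by auto
        have "move N (?q t) (\<tau> (?q t)) \<in> Att E N {1..N-1} k" using Att_nK_down[OF qA nc nK y] .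
        then have mA: "?q (Suc t) \<in> Att E N {1..N-1} k" using qs r by simp
        have "?q (Suc t) \<in> FinS E N" "rk E N (?q (Suc t)) \<le> k" using Fin_I[OF mA] rk_le[OF mA] by auto
        then show ?thesis using IH k by simp
      next
        case False
        have r: "?\<rho> (?q t) = optS E N (?q t)" using False unfolding mix_def by simp
        have "Good E N (?q t) (optS E N (?q t))" using optS_spec[OF fin] by blast
        then have "?q (Suc t) \<in> FinS E N \<and> rk E N (?q (Suc t)) + 1 = rk E N (?q t)"
          using nc IH qs r unfolding Good_def by auto
        then show ?thesis using IH by simp
      qed
    qed
  qed
  show ?thesis
  proof (cases "\<exists>t'\<le>rk E N s. is_capture N (?q t')")
    case True then show ?thesis by blast
  next
    case False
    then have "?q (rk E N s) \<in> FinS E N \<and> rk E N (?q (rk E N s)) = 0" using inv[of "rk E N s"] by auto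
    then have "is_capture N (?q (rk E N s))" using rk0_cap by blast
    then show ?thesis by blast
  qed
qed

lemma cop_dev:
  assumes G: "simple_conn_graph V E" and v: "valid_state V N s" and \<tau>: "legal_strat V E N \<tau>"
    and c: "is_capture N (play N (mix {N} (optS E N) \<tau>) s T)"
  shows "s \<in> FinS E N \<and> rk E N s \<le> T"
proof -
  have fin: "\<forall>x. finite (cnbhd E x)" using fin_cnbhd[OF G] by blast
  let ?\<rho> = "mix {N} (optS E N) \<tau>"
  let ?q = "play N ?\<rho> s"
  have leg: "legal_strat V E N ?\<rho>" using legal_mix[OF legal_optS[OF fin] \<tau>] .
  have inv: "?q t \<notin> FinS E N \<or> (?q t \<in> FinS E N \<and> s \<in> FinS E N \<and> rk E N s \<le> rk E N (?q t) + t)" for t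
  proof (induction t)
    case 0 then show ?case by simp
  next
    case (Suc t)
    have vq: "valid_state V N (?q t)" using play_valid[OF G v leg] .
    have qs: "?q (Suc t) = move N (?q t) (?\<rho> (?q t))" by simp
    have tr: "turn (?q t) \<in> {1..N}" using valid_turn[OF vq] .
    have gd: "Good E N (?q t) (optS E N (?q t))" using optS_spec[OF fin] by blast
    show ?case
    proof (cases "?q t \<in> FinS E N")
      case False
      have nc: "\<not> is_capture N (?q t)" using cap_Fin[of N "?q t" E] False by auto
      show ?thesis
      proof (cases "turn (?q t) = N")
        case True
        then have "?\<rho> (?q t) = optS E N (?q t)" unfolding mix_def by simp
        then show ?thesis using gd nc False qs unfolding Good_def by auto
      next
        case tN: False
        then have r: "?\<rho> (?q t) = \<tau> (?q t)" unfolding mix_def by simp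
        have y: "\<tau> (?q t) \<in> cnbhd E (pos (?q t) (turn (?q t)))" using \<tau> vq unfolding legal_strat_def by blast
        have K: "turn (?q t) \<in> {1..N-1}" using tr tN by auto
        have nA: "\<forall>n. ?q t \<notin> Att E N {1..N-1} n" using False Fin_I by blast
        have "\<forall>n. move N (?q t) (\<tau> (?q t)) \<notin> Att E N {1..N-1} n" using notAtt_K[OF K nA y] .
        then have "?q (Suc t) \<notin> FinS E N" using qs r unfolding FinS_def by auto
        then show ?thesis by blast
      qed
    next
      case True
      then have IH: "s \<in> FinS E N" "rk E N s \<le> rk E N (?q t) + t" using Suc by auto
      show ?thesis
      proof (cases "is_capture N (?q t)")
        case True
        then have "rk E N (?q t) = 0" using cap_Fin by blast
        then show ?thesis using IH by auto
      next
        case nc: False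
        show ?thesis
        proof (cases "turn (?q t) = N")
          case tN: True
          then have "?\<rho> (?q t) = optS E N (?q t)" unfolding mix_def by simp
          then have "?q (Suc t) \<in> FinS E N \<and> rk E N (?q (Suc t)) + 1 = rk E N (?q t)"
            using gd nc True qs unfolding Good_def by auto
          then show ?thesis using IH by auto
        next
          case tN: False
          then have r: "?\<rho> (?q t) = \<tau> (?q t)" unfolding mix_def by simp
          have y: "\<tau> (?q t) \<in> cnbhd E (pos (?q t) (turn (?q t)))" using \<tau> vq unfolding legal_strat_def by blast
          have K: "turn (?q t) \<in> {1..N-1}" using tr tN by auto
          show ?thesis
          proof (cases "?q (Suc t) \<in> FinS E N")
            case mF: True
            have "move N (?q t) (\<tau> (?q t)) \<in> Att E N {1..N-1} (rk E N (?q (Suc t)))"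
              using rk_Att[OF mF] qs r by simp
            then have "?q t \<in> Att E N {1..N-1} (Suc (rk E N (?q (Suc t))))" using Att_K_step[OF K y] by blast
            then have "rk E N (?q t) \<le> Suc (rk E N (?q (Suc t)))" by (rule rk_le)
            then show ?thesis using IH mF by auto
          qed simp
        qed
      qed
    qed
  qed
  have "?q T \<in> FinS E N \<and> rk E N (?q T) = 0" using cap_Fin[OF c] .
  then show ?thesis using inv[of T] by auto
qed

theorem CR_exists:
  assumes G: "simple_conn_graph V E" and g: "0 \<le> \<gamma>" "\<gamma> \<le> 1"
  shows "CR_optimal V E N \<gamma> (optS E N)"
  unfolding CR_optimal_def
proof (intro conjI allI impI)
  have fin: "\<forall>x. finite (cnbhd E x)" using fin_cnbhd[OF G] by blast
  show "legal_strat V E N (optS E N)" using legal_optS[OF fin] .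
  fix s \<tau> assume v: "valid_state V N s" and \<tau>: "legal_strat V E N \<tau>"
  show "robber_payoff N \<gamma> (mix {N} \<tau> (optS E N)) s \<le> robber_payoff N \<gamma> (optS E N) s"
  proof (cases "s \<in> FinS E N")
    case True
    obtain t where t: "t \<le> rk E N s" "is_capture N (play N (mix {N} \<tau> (optS E N)) s t)"
      using rob_dev[OF G v \<tau> True] by blast
    obtain T where T: "is_capture N (play N (mix {N} \<tau> (optS E N)) s T)"
      "\<forall>t'<T. \<not> is_capture N (play N (mix {N} \<tau> (optS E N)) s t')"
      "robber_payoff N \<gamma> (mix {N} \<tau> (optS E N)) s = - (\<gamma> ^ T)"
      using payoff_first t(2) by (metis (no_types, lifting))
    have "T \<le> t" using T(2) t(2) not_le by blast
    then have "\<gamma> ^ rk E N s \<le> \<gamma> ^ T" using t(1) g by (simp add: power_decreasing)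
    then show ?thesis using T(3) opt_payoff[OF fin] True by simp
  next
    case False
    then show ?thesis using opt_payoff[OF fin] payoff_le0[OF g(1)] by simp
  qed
  show "robber_payoff N \<gamma> (optS E N) s \<le> robber_payoff N \<gamma> (mix {N} (optS E N) \<tau>) s"
  proof (cases "\<exists>t. is_capture N (play N (mix {N} (optS E N) \<tau>) s t)")
    case True
    obtain T where T: "is_capture N (play N (mix {N} (optS E N) \<tau>) s T)"
      "robber_payoff N \<gamma> (mix {N} (optS E N) \<tau>) s = - (\<gamma> ^ T)"
      using payoff_first[OF True] by metis
    have "s \<in> FinS E N \<and> rk E N s \<le> T" using cop_dev[OF G v \<tau> T(1)] .
    then have "\<gamma> ^ T \<le> \<gamma> ^ rk E N s" "s \<in> FinS E N" using g by (auto simp add: power_decreasing)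
    then show ?thesis using T(2) opt_payoff[OF fin] by simp
  next
    case False
    then show ?thesis using payoff_nocap[of N "mix {N} (optS E N) \<tau>" s \<gamma>] opt_payoff[OF fin] payoff_le0[OF g(1)]
      by (metis)
  qed
qed

definition tf :: "nat \<Rightarrow> nat \<Rightarrow> nat" where
  "tf N t = (if t mod N = 0 then N else t mod N)"

lemma tf_lt: "0 < t \<Longrightarrow> t < N \<Longrightarrow> tf N t = t" unfolding tf_def by simp
lemma tf_N: "tf N N = N" unfolding tf_def by simp
lemma tf_gt: "N < t \<Longrightarrow> t < N + N \<Longrightarrow> tf N t = t - N"
proof -
  assume a: "N < t" "t < N + N"
  have "t mod N = (t - N) mod N" using a le_mod_geq by simp
  also have "\<dots> = t - N" using a by simp
  finally show ?thesis unfolding tf_def using a by simp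
qed

lemma tf_Suc: "2 \<le> N \<Longrightarrow> nxt N (tf N t) = tf N (Suc t)"
  unfolding tf_def nxt_def by (auto simp: mod_Suc)

definition Mv :: "('v \<Rightarrow> 'v \<Rightarrow> bool) \<Rightarrow> nat \<Rightarrow> (nat \<Rightarrow> 'v state) \<Rightarrow> bool" where
  "Mv E N p \<longleftrightarrow> (\<forall>t. \<exists>y\<in>cnbhd E (pos (p t) (turn (p t))). p (Suc t) = move N (p t) y)"

lemma Mv_len: "Mv E N p \<Longrightarrow> length (fst (p 0)) = N \<Longrightarrow> length (fst (p t)) = N"
proof (induction t)
  case (Suc t)
  then obtain y where "p (Suc t) = move N (p t) y" unfolding Mv_def by blast
  then show ?case using Suc by (simp add: fst_move)
qed simp

lemma Mv_turn: "Mv E N p \<Longrightarrow> turn (p 0) = N \<Longrightarrow> 2 \<le> N \<Longrightarrow> turn (p t) = tf N t"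
proof (induction t)
  case 0 then show ?case unfolding tf_def by simp
next
  case (Suc t)
  then obtain y where "p (Suc t) = move N (p t) y" unfolding Mv_def by blast
  then show ?case using Suc tf_Suc by simp
qed

lemma tf_range: "2 \<le> N \<Longrightarrow> tf N t \<in> {1..N}"
  unfolding tf_def by (auto simp: Suc_leI)

locale seqp =
  fixes E :: "'v \<Rightarrow> 'v \<Rightarrow> bool" and N :: nat and p :: "nat \<Rightarrow> 'v state"
  assumes Mv: "Mv E N p" and len0: "length (fst (p 0)) = N" and turn0: "turn (p 0) = N" and N2: "2 \<le> N"
begin

lemma len: "length (fst (p t)) = N" using Mv_len[OF Mv len0] .
lemma trn: "turn (p t) = tf N t" using Mv_turn[OF Mv turn0 N2] .

lemma pos_other: "i \<in> {1..N} \<Longrightarrow> turn (p t) \<noteq> i \<Longrightarrow> pos (p (Suc t)) i = pos (p t) i"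
proof -
  assume i: "i \<in> {1..N}" "turn (p t) \<noteq> i"
  obtain y where y: "p (Suc t) = move N (p t) y" using Mv unfolding Mv_def by blast
  have "turn (p t) \<in> {1..N}" using trn tf_range N2 by simp
  then show ?thesis using y i pos_move[of i "p t" N y] len by simp
qed

lemma pos_mover: "pos (p (Suc t)) (turn (p t)) \<in> cnbhd E (pos (p t) (turn (p t)))"
proof -
  obtain y where y: "y \<in> cnbhd E (pos (p t) (turn (p t)))" "p (Suc t) = move N (p t) y"
    using Mv unfolding Mv_def by blast
  have "turn (p t) \<in> {1..N}" using trn tf_range N2 by simp
  then show ?thesis using y pos_move[of "turn (p t)" "p t" N y] len by simp
qed

lemma pos_const: "i \<in> {1..N} \<Longrightarrow> a \<le> b \<Longrightarrow> (\<forall>t. a \<le> t \<and> t < b \<longrightarrow> turn (p t) \<noteq> i)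
   \<Longrightarrow> pos (p b) i = pos (p a) i"
proof (induction b)
  case 0 then show ?case by simp
next
  case (Suc b)
  show ?case
  proof (cases "a = Suc b")
    case False
    then have "a \<le> b" using Suc by simp
    then show ?thesis using Suc pos_other[of i b] by simp
  qed simp
qed

end

section \<open>The trap\<close>

definition trapf :: "('v \<Rightarrow> 'v \<Rightarrow> bool) \<Rightarrow> nat \<Rightarrow> nat \<Rightarrow> 'v \<Rightarrow> 'v state \<Rightarrow> 'v" where
  "trapf E N m u q = (if pos q N \<in> cnbhd E (pos q m) then pos q N
      else if u \<in> cnbhd E (pos q m) then u else pos q m)"

lemma trapf_in: "trapf E N m u q \<in> cnbhd E (pos q m) \<or> (u \<notin> cnbhd E (pos q m) \<and> trapf E N m u q = pos q m)"
  unfolding trapf_def using cnbhd_self by auto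

lemma trapf_cn: "trapf E N m u q \<in> cnbhd E (pos q m)"
  unfolding trapf_def using cnbhd_self[of "pos q m" E] by auto

lemma capI: "i \<in> {1..N-1} \<Longrightarrow> pos q i = pos q N \<Longrightarrow> is_capture N q"
  unfolding is_capture_def by blast

lemma leaf_nbr:
  assumes G: "simple_conn_graph V E" and l: "is_leaf E y" and e: "E y u"
  shows "cnbhd E y = {y, u}"
proof -
  have "card {v. E y v} = 1" using l is_leaf_def by metis
  then obtain a where a: "{v. E y v} = {a}" using card_1_singletonE by blast
  moreover have "u \<in> {v. E y v}" using e by simp
  ultimately have "a = u" by simp
  then show ?thesis using a unfolding cnbhd_def by simp
qed

lemma trap:
  assumes G: "simple_conn_graph V E" and m: "m \<in> {1..N-1}"
    and sq: "seqp E N p"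
    and pu: "pos (p 0) N = u" and pw: "pos (p 0) m = w" and Ewu: "E w u"
    and hyp: "\<forall>y\<in>cnbhd E u. y \<in> cnbhd E w \<or> (\<exists>j\<in>{1..N-1}. pos (p 0) j = y) \<or> is_leaf E y"
    and fm: "\<forall>t. turn (p t) = m \<longrightarrow> pos (p (Suc t)) m = trapf E N m u (p t)"
  shows "\<exists>t. is_capture N (p t)"
proof (rule ccontr)
  assume nocap: "\<not> ?thesis"
  interpret seqp E N p by (rule sq)
  have sym: "\<And>a b. E a b \<Longrightarrow> E b a" using G unfolding simple_conn_graph_def by blast
  have mN: "1 \<le> m" "m < N" using m N2 by auto
  have NN: "N \<in> {1..N}" using N2 by simp
  have mm: "m \<in> {1..N}" using mN by simp
  define y1 where "y1 = pos (p 1) N"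
  have y1u: "y1 \<in> cnbhd E u" using pos_mover[of 0] trn[of 0] tf_def pu y1_def by simp
  have cop1: "pos (p 1) j = pos (p 0) j" if "j \<in> {1..N-1}" for j
    using pos_other[of j 0] that trn[of 0] tf_def by auto
  have rob: "pos (p t) N = y1" if "1 \<le> t" "t \<le> N" for t
  proof -
    have "\<forall>t'. 1 \<le> t' \<and> t' < t \<longrightarrow> turn (p t') \<noteq> N" using trn tf_lt that by auto
    then show ?thesis using pos_const[OF NN that(1)] y1_def by simp
  qed
  have A: "\<not> (\<exists>j\<in>{1..N-1}. pos (p 0) j = y1)"
  proof
    assume "\<exists>j\<in>{1..N-1}. pos (p 0) j = y1"
    then obtain j where "j \<in> {1..N-1}" "pos (p 1) j = pos (p 1) N" using cop1 y1_def by metis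
    then show False using nocap capI by blast
  qed
  have mw: "pos (p m) m = w"
  proof -
    have "\<forall>t'. 0 \<le> t' \<and> t' < m \<longrightarrow> turn (p t') \<noteq> m"
      using trn tf_lt mN unfolding tf_def by auto
    then show ?thesis using pos_const[OF mm, of 0 m] pw by simp
  qed
  have tm: "turn (p m) = m" using trn tf_lt mN by simp
  have rm: "pos (p m) N = y1" using rob mN by simp
  have rm1: "pos (p (Suc m)) N = y1" using rob mN by simp
  have step_m: "pos (p (Suc m)) m = trapf E N m u (p m)" using fm tm by simp
  have B: "y1 \<notin> cnbhd E w"
  proof
    assume "y1 \<in> cnbhd E w"
    then have "pos (p (Suc m)) m = y1" using step_m mw rm unfolding trapf_def by simp
    then show False using nocap capI[of m N] m rm1 by metis
  qed
  have uw: "u \<in> cnbhd E w" using Ewu unfolding cnbhd_def by simp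
  have leaf: "is_leaf E y1" using hyp y1u A B by blast
  have y1nu: "y1 \<noteq> u" using B uw by blast
  have Euy: "E u y1" using y1u y1nu unfolding cnbhd_def by simp
  have nb: "cnbhd E y1 = {y1, u}" using leaf_nbr[OF G leaf sym[OF Euy]] .
  have mu: "pos (p (Suc m)) m = u" using step_m mw rm B uw unfolding trapf_def by simp
  have mconst: "pos (p b) m = u" if "Suc m \<le> b" "b \<le> N + m" for b
  proof -
    have "\<forall>t'. Suc m \<le> t' \<and> t' < b \<longrightarrow> turn (p t') \<noteq> m"
    proof (intro allI impI)
      fix t' assume t': "Suc m \<le> t' \<and> t' < b"
      show "turn (p t') \<noteq> m"
      proof (cases "t' < N")
        case True then show ?thesis using trn tf_lt t' by simp
      next
        case False
        show ?thesis
        proof (cases "t' = N")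
          case True then show ?thesis using trn tf_N mN by simp
        next
          case False
          then have "N < t'" "t' < N + N" using \<open>\<not> t' < N\<close> t' that mN by auto
          then have "turn (p t') = t' - N" using trn tf_gt by simp
          then show ?thesis using t' that \<open>N < t'\<close> by linarith
        qed
      qed
    qed
    then show ?thesis using pos_const[OF mm that(1)] mu by simp
  qed
  have tN: "turn (p N) = N" using trn tf_N by simp
  define y2 where "y2 = pos (p (Suc N)) N"
  have "y2 \<in> cnbhd E y1" using pos_mover[of N] tN rob[of N] N2 y2_def by simp
  then have y2: "y2 = y1 \<or> y2 = u" using nb by simp
  have mN1: "pos (p (Suc N)) m = u" using mconst mN by simp
  have y2u: "y2 \<noteq> u"
  proof
    assume "y2 = u"
    then show False using nocap capI[of m N "p (Suc N)"] m mN1 y2_def by metis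
  qed
  have rob2: "pos (p (N + m)) N = y1"
  proof -
    have "\<forall>t'. Suc N \<le> t' \<and> t' < N + m \<longrightarrow> turn (p t') \<noteq> N"
      using trn tf_gt mN by auto
    then have "pos (p (N + m)) N = pos (p (Suc N)) N" using pos_const[OF NN, of "Suc N" "N + m"] mN by simp
    then show ?thesis using y2 y2u y2_def by simp
  qed
  have tNm: "turn (p (N + m)) = m" using trn tf_gt[of N "N + m"] mN by simp
  have mNm: "pos (p (N + m)) m = u" using mconst mN by simp
  have "pos (p (Suc (N + m))) m = y1"
    using fm tNm mNm rob2 Euy unfolding trapf_def cnbhd_def by simp
  moreover have "pos (p (Suc (N + m))) N = y1" using pos_other[OF NN, of "N + m"] tNm mN rob2 by simp
  ultimately show False using nocap capI[of m N "p (Suc (N + m))"] m by metis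
qed

definition trapS :: "('v \<Rightarrow> 'v \<Rightarrow> bool) \<Rightarrow> nat \<Rightarrow> nat \<Rightarrow> 'v \<Rightarrow> 'v state \<Rightarrow> 'v" where
  "trapS E N m u q = (if turn q = m then trapf E N m u q else pos q (turn q))"

lemma trapS_cn: "trapS E N m u q \<in> cnbhd E (pos q (turn q))"
proof (cases "turn q = m")
  case True then show ?thesis unfolding trapS_def using trapf_cn[of E N m u q] by simp
next
  case False then show ?thesis unfolding trapS_def using cnbhd_self[of "pos q (turn q)" E] by simp
qed

definition trap_hyp where
  "trap_hyp V E N m s u w \<longleftrightarrow> simple_conn_graph V E \<and> 2 \<le> N \<and> m \<in> {1..N-1} \<and> valid_state V N s \<and>
     turn s = N \<and> pos s N = u \<and> pos s m = w \<and> E w u \<and>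
     (\<forall>y\<in>cnbhd E u. y \<in> cnbhd E w \<or> (\<exists>j\<in>{1..N-1}. pos s j = y) \<or> is_leaf E y)"

lemma trap_seq:
  assumes th: "trap_hyp V E N m s u w" and p0: "p 0 = s" and mv: "Mv E N p"
    and fm: "\<forall>t. turn (p t) = m \<longrightarrow> p (Suc t) = move N (p t) (trapf E N m u (p t))"
  shows "\<exists>t. is_capture N (p t)"
proof -
  have G: "simple_conn_graph V E" and N2: "2 \<le> N" and m: "m \<in> {1..N-1}" and v: "valid_state V N s"
    and ts: "turn s = N" and pu: "pos s N = u" and pw: "pos s m = w" and Ewu: "E w u"
    and hyp: "\<forall>y\<in>cnbhd E u. y \<in> cnbhd E w \<or> (\<exists>j\<in>{1..N-1}. pos s j = y) \<or> is_leaf E y"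
    using th unfolding trap_hyp_def by blast+
  have sq: "seqp E N p" unfolding seqp_def using mv p0 v ts N2 unfolding valid_state_def by simp
  interpret seqp E N p by (rule sq)
  have "\<forall>t. turn (p t) = m \<longrightarrow> pos (p (Suc t)) m = trapf E N m u (p t)"
  proof (intro allI impI)
    fix t assume tm: "turn (p t) = m"
    have "m \<in> {1..N}" using m by auto
    then show "pos (p (Suc t)) m = trapf E N m u (p t)"
      using fm tm pos_move[of m "p t" N] len by simp
  qed
  then show ?thesis using trap[OF G m sq] p0 pu pw Ewu hyp by blast
qed

lemma force_trap:
  assumes th: "trap_hyp V E N m s u w"
  shows "can_force V E N s {m}"
  unfolding can_force_def
proof (rule exI[where x="\<lambda>h. trapS E N m u (last h)"], intro conjI allI impI)
  let ?\<sigma> = "\<lambda>h. trapS E N m u (last h)"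
  show "?\<sigma> h \<in> cnbhd E (pos (last h) (turn (last h)))" for h by (rule trapS_cn)
  fix p assume a: "p 0 = s \<and> (\<forall>t. \<exists>y. y \<in> cnbhd E (pos (p t) (turn (p t))) \<and> p (Suc t) = move N (p t) y \<and>
                  (turn (p t) \<in> {m} \<longrightarrow> y = ?\<sigma> (map p [0..<Suc t])))"
  have mv: "Mv E N p" unfolding Mv_def using a by blast
  have "\<forall>t. turn (p t) = m \<longrightarrow> p (Suc t) = move N (p t) (trapf E N m u (p t))"
  proof (intro allI impI)
    fix t assume tm: "turn (p t) = m"
    obtain y where "p (Suc t) = move N (p t) y" "y = ?\<sigma> (map p [0..<Suc t])" using a tm by blast
    then show "p (Suc t) = move N (p t) (trapf E N m u (p t))" using tm unfolding trapS_def by simp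
  qed
  then show "\<exists>t. is_capture N (p t)" using trap_seq[OF th] a mv by blast
qed

lemma force_one:
  assumes "can_force V E N s {m}" "m \<in> {1..N-1}"
  shows "state_cop_num V E N s = 1"
proof -
  have k1: "k_cops_force V E N s 1" unfolding k_cops_force_def using assms by (auto intro!: exI[of _ "{m}"])
  have "(LEAST k. k_cops_force V E N s k) = 1"
  proof (rule Least_equality)
    show "k_cops_force V E N s 1" by (rule k1)
    show "\<And>y. k_cops_force V E N s y \<Longrightarrow> 1 \<le> y" unfolding k_cops_force_def by auto
  qed
  then show ?thesis unfolding state_cop_num_def using k1 by (auto simp: one_enat_def)
qed

lemma trap_play:
  assumes th: "trap_hyp V E N m s u w" and \<sigma>: "legal_strat V E N \<sigma>"
  shows "\<exists>t. is_capture N (play N (mix {N} \<sigma> (trapS E N m u)) s t)"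
proof -
  have G: "simple_conn_graph V E" and m: "m \<in> {1..N-1}" and v: "valid_state V N s"
    using th unfolding trap_hyp_def by blast+
  let ?\<rho> = "mix {N} \<sigma> (trapS E N m u)"
  have lt: "legal_strat V E N (trapS E N m u)" unfolding legal_strat_def using trapS_cn[of E N m u] by blast
  have leg: "legal_strat V E N ?\<rho>" using legal_mix[OF \<sigma> lt] .
  have mv: "Mv E N (play N ?\<rho> s)" unfolding Mv_def
  proof
    fix t
    have "?\<rho> (play N ?\<rho> s t) \<in> cnbhd E (pos (play N ?\<rho> s t) (turn (play N ?\<rho> s t)))"
      using play_step[OF leg play_valid[OF G v leg]] .
    then show "\<exists>y\<in>cnbhd E (pos (play N ?\<rho> s t) (turn (play N ?\<rho> s t))). play N ?\<rho> s (Suc t) = move N (play N ?\<rho> s t) y"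
      using play_Suc by blast
  qed
  have "\<forall>t. turn (play N ?\<rho> s t) = m \<longrightarrow> play N ?\<rho> s (Suc t) = move N (play N ?\<rho> s t) (trapf E N m u (play N ?\<rho> s t))"
    using m unfolding mix_def trapS_def by auto
  then show ?thesis using trap_seq[OF th _ mv] by simp
qed


lemma CR_opt_rob: "CR_optimal V E N \<gamma> \<sigma> \<Longrightarrow> valid_state V N s \<Longrightarrow> legal_strat V E N \<tau> \<Longrightarrow>
   robber_payoff N \<gamma> (mix {N} \<tau> \<sigma>) s \<le> robber_payoff N \<gamma> \<sigma> s"
  unfolding CR_optimal_def by blast

lemma CR_opt_cop: "CR_optimal V E N \<gamma> \<sigma> \<Longrightarrow> valid_state V N s \<Longrightarrow> legal_strat V E N \<tau> \<Longrightarrow>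
   robber_payoff N \<gamma> \<sigma> s \<le> robber_payoff N \<gamma> (mix {N} \<sigma> \<tau>) s"
  unfolding CR_optimal_def by blast

lemma cap_fst: "fst q = fst q' \<Longrightarrow> is_capture N q = is_capture N q'"
  unfolding is_capture_def pos_def by simp

lemma play_first_unique:
  assumes "is_capture N (play N \<sigma> s T)" "\<forall>t'<T. \<not> is_capture N (play N \<sigma> s t')"
    "i < T - 1" "0 < T"
  shows "play N \<sigma> s i \<noteq> play N \<sigma> s (T - 1)"
proof
  assume e: "play N \<sigma> s i = play N \<sigma> s (T - 1)"
  have "play N \<sigma> s (Suc i) = play N \<sigma> s (Suc (T - 1))" using e by simp
  then have c: "is_capture N (play N \<sigma> s (Suc i))" using assms(1,4) by (cases T) auto
  have "Suc i < T" using assms(3) by linarith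
  then show False using assms(2) c by blast
qed

lemma G3_contra:
  assumes th: "trap_hyp V E N m s u w" and nc: "\<not> is_capture N s"
    and j: "j \<in> {1..N-1}" and pj: "pos s j = v" and Euv: "E u v" and vw: "v \<noteq> w"
    and g: "0 < \<gamma>" "\<gamma> < 1" and G3: "in_G3 V E N \<gamma>"
  shows False
proof -
  have G: "simple_conn_graph V E" and N2: "2 \<le> N" and m: "m \<in> {1..N-1}" and v: "valid_state V N s"
    and ts: "turn s = N" and pu: "pos s N = u" and pw: "pos s m = w" and Ewu: "E w u"
    using th unfolding trap_hyp_def by blast+
  have fin: "\<forall>x. finite (cnbhd E x)" using fin_cnbhd[OF G] by blast
  have sym: "\<And>a b. E a b \<Longrightarrow> E b a" using G unfolding simple_conn_graph_def by blast
  have c1: "state_cop_num V E N s = 1" using force_one[OF force_trap[OF th] m] .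
  have snc: "s \<in> S_nc V N" using v nc unfolding S_nc_def by simp
  have sc: "sure_capture V E N \<gamma> s" using G3 snc c1 unfolding in_G3_def by blast
  let ?\<sigma> = "optS E N"
  have opt: "CR_optimal V E N \<gamma> ?\<sigma>" using CR_exists[OF G] g by simp
  have leg: "legal_strat V E N ?\<sigma>" using legal_optS[OF fin] .
  have lt: "legal_strat V E N (trapS E N m u)" unfolding legal_strat_def using trapS_cn[of E N m u] by blast
  have "\<exists>t. is_capture N (play N (mix {N} ?\<sigma> (trapS E N m u)) s t)" using trap_play[OF th leg] .
  then obtain T0 where "is_capture N (play N (mix {N} ?\<sigma> (trapS E N m u)) s T0)"
    "\<forall>t'<T0. \<not> is_capture N (play N (mix {N} ?\<sigma> (trapS E N m u)) s t')"
    "robber_payoff N \<gamma> (mix {N} ?\<sigma> (trapS E N m u)) s = - (\<gamma> ^ T0)"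
    by (rule payoff_first)
  moreover have "robber_payoff N \<gamma> ?\<sigma> s \<le> robber_payoff N \<gamma> (mix {N} ?\<sigma> (trapS E N m u)) s"
    using CR_opt_cop[OF opt v lt] .
  moreover have "0 < \<gamma> ^ T0" using g by simp
  ultimately have "robber_payoff N \<gamma> ?\<sigma> s \<noteq> 0" by linarith
  then have "\<exists>t. is_capture N (play N ?\<sigma> s t)" using payoff_nocap[of N ?\<sigma> s \<gamma>] by blast
  then obtain T where T: "is_capture N (play N ?\<sigma> s T)" "\<forall>t'<T. \<not> is_capture N (play N ?\<sigma> s t')"
    "robber_payoff N \<gamma> ?\<sigma> s = - (\<gamma> ^ T)"
    by (rule payoff_first)
  have T0: "0 < T" using T(1) nc by (cases T) auto
  define z where "z = play N ?\<sigma> s (T - 1)"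
  have zT: "play N ?\<sigma> s T = move N z (?\<sigma> z)" using T0 z_def by (cases T) auto
  have znc: "\<not> is_capture N z" using T(2) T0 z_def by simp
  have vz: "valid_state V N z" using play_valid[OF G v leg] z_def by simp
  have tzN: "turn z \<noteq> N"
  proof
    assume tz: "turn z = N"
    define \<tau> where "\<tau> q = (if q = z then pos q N else ?\<sigma> q)" for q
    have l\<tau>: "legal_strat V E N \<tau>"
      unfolding legal_strat_def \<tau>_def using leg tz cnbhd_self[of "pos z N" E] unfolding legal_strat_def by auto
    let ?\<rho> = "mix {N} \<tau> ?\<sigma>"
    have \<rho>\<sigma>: "?\<rho> q = ?\<sigma> q" if "q \<noteq> z" for q using that unfolding mix_def \<tau>_def by simp
    have \<rho>z: "?\<rho> z = pos z N" using tz unfolding mix_def \<tau>_def by simp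
    have same: "i \<le> T - 1 \<Longrightarrow> play N ?\<rho> s i = play N ?\<sigma> s i" for i
    proof (induction i)
      case (Suc i)
      then have "i < T - 1" by simp
      then have "play N ?\<sigma> s i \<noteq> z" using play_first_unique[OF T(1) T(2) _ T0] z_def by blast
      then show ?case using Suc \<rho>\<sigma> by simp
    qed simp
    have pz: "play N ?\<rho> s (T - 1) = z" using same z_def by simp
    have "play N ?\<rho> s T = move N z (pos z N)" using pz \<rho>z T0 by (cases T) auto
    moreover have "fst (move N z (pos z N)) = fst z"
      using tz unfolding fst_move pos_def by simp
    ultimately have ncT: "\<not> is_capture N (play N ?\<rho> s T)" using znc cap_fst by metis
    have ncle: "\<forall>i\<le>T. \<not> is_capture N (play N ?\<rho> s i)"
    proof (intro allI impI)
      fix i assume "i \<le> T"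
      then consider "i = T" | "i \<le> T - 1" by linarith
      then show "\<not> is_capture N (play N ?\<rho> s i)"
      proof cases
        case 1 then show ?thesis using ncT by simp
      next
        case 2 then show ?thesis using same T(2) T0 by simp
      qed
    qed
    have dev: "robber_payoff N \<gamma> ?\<rho> s \<le> - (\<gamma> ^ T)" using CR_opt_rob[OF opt v l\<tau>] T(3) by simp
    show False
    proof (cases "\<exists>t. is_capture N (play N ?\<rho> s t)")
      case True
      then obtain T' where T': "is_capture N (play N ?\<rho> s T')" "\<forall>t'<T'. \<not> is_capture N (play N ?\<rho> s t')"
         "robber_payoff N \<gamma> ?\<rho> s = - (\<gamma> ^ T')"
        by (rule payoff_first)
      have "T < T'" using ncle T'(1) not_le by blast
      then have "\<gamma> ^ T' < \<gamma> ^ T" using g by (simp add: power_strict_decreasing)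
      then show False using dev T'(3) by simp
    next
      case False
      then have "robber_payoff N \<gamma> ?\<rho> s = 0" using payoff_nocap[of N ?\<rho> s \<gamma>] by blast
      moreover have "0 < \<gamma> ^ T" using g by simp
      ultimately show False using dev by simp
    qed
  qed
  define m' where "m' = turn z"
  have m': "m' \<in> {1..N-1}" using valid_turn[OF vz] tzN m'_def by auto
  have hc: "hat_C V E N \<gamma> s m'"
    unfolding hat_C_def using m' opt T0 T(1,2) z_def m'_def by blast
  have hs: "?\<sigma> \<in> hat_Sigma V E N \<gamma> m'" unfolding hat_Sigma_def using opt by blast
  define Tg where "Tg = (if pos s m' = w then v else w)"
  have Tgu: "Tg \<in> cnbhd E u" using Euv sym[OF Ewu] unfolding Tg_def cnbhd_def by simp
  define \<tau> where "\<tau> q = (if turn q = N \<and> pos q N = u then Tg else pos q (turn q))" for q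
  have l\<tau>: "legal_strat V E N \<tau>" unfolding legal_strat_def \<tau>_def
    using Tgu cnbhd_self by auto
  obtain t where t: "is_capture N (play N (mix {m'} ?\<sigma> \<tau>) s t)"
      "\<forall>t'<t. \<not> is_capture N (play N (mix {m'} ?\<sigma> \<tau>) s t')"
      "pos (play N (mix {m'} ?\<sigma> \<tau>) s t) m' = pos (play N (mix {m'} ?\<sigma> \<tau>) s t) N"
    using sc hc hs l\<tau> unfolding sure_capture_def by blast
  let ?p1 = "play N (mix {m'} ?\<sigma> \<tau>) s 1"
  have m'N: "m' \<noteq> N" using m' by auto
  have r: "mix {m'} ?\<sigma> \<tau> s = Tg" using m'N ts pu unfolding mix_def \<tau>_def by simp
  have p1: "?p1 = move N s Tg" using r by simp
  have len: "length (fst s) = N" using v unfolding valid_state_def by simp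
  have p1N: "pos ?p1 N = Tg" using p1 pos_move[of N s N Tg] ts len N2 by simp
  have p1i: "pos ?p1 i = pos s i" if "i \<in> {1..N-1}" for i
    using p1 pos_move[of i s N Tg] ts len that by auto
  have cap1: "is_capture N ?p1"
  proof (cases "pos s m' = w")
    case True
    then have "pos ?p1 j = pos ?p1 N" using p1N p1i[OF j] pj Tg_def by simp
    then show ?thesis using capI[OF j] by blast
  next
    case False
    then have "pos ?p1 m = pos ?p1 N" using p1N p1i[OF m] pw Tg_def by simp
    then show ?thesis using capI[OF m] by blast
  qed
  have "t = 1"
  proof (rule ccontr)
    assume "t \<noteq> 1"
    then consider "t = 0" | "1 < t" by linarith
    then show False
    proof cases
      case 1 then show False using t(1) nc by simp
    next
      case 2 then show False using t(2) cap1 by blast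
    qed
  qed
  then have "pos s m' = Tg" using t(3) p1N p1i[OF m'] by simp
  then show False unfolding Tg_def using vw by (auto split: if_splits)
qed


lemma capt_analysis:
  assumes fq: "fst q = ((fst s)[N-1 := y])[m-1 := z]" and len: "length (fst s) = N"
    and m: "m \<in> {1..N-1}" and c: "is_capture N q"
  shows "y = z \<or> (\<exists>j\<in>{1..N-1}. pos s j = y)"
proof -
  obtain i where i: "i \<in> {1..N-1}" "pos q i = pos q N" using c unfolding is_capture_def by blast
  have qN: "pos q N = y" using fq len m unfolding pos_def by (auto simp: nth_list_update)
  show ?thesis
  proof (cases "i = m")
    case True
    then have "pos q i = z" using fq len m unfolding pos_def by (auto simp: nth_list_update)
    then show ?thesis using i qN by simp
  next
    case False
    then have "pos q i = pos s i" using fq len m i unfolding pos_def by (auto simp: nth_list_update)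
    then show ?thesis using i qN by auto
  qed
qed

lemma round:
  assumes G: "simple_conn_graph V E" and N2: "2 \<le> N" and m: "m \<in> {1..N-1}"
    and v: "valid_state V N s" and ts: "turn s = N" and nc: "\<not> is_capture N s"
    and sA: "s \<in> Att E N {m} n" and y: "y \<in> cnbhd E (pos s N)"
  shows "y \<in> cnbhd E (pos s m) \<or> (\<exists>j\<in>{1..N-1}. pos s j = y) \<or>
    (\<exists>q. q \<in> Att E N {m} (n - N) \<and> valid_state V N q \<and> turn q = N \<and> \<not> is_capture N q \<and> pos q N = y)"
proof -
  define w where "w = pos s m"
  define C where "C = (y \<in> cnbhd E w \<or> (\<exists>j\<in>{1..N-1}. pos s j = y))"
  have len: "length (fst s) = N" using v unfolding valid_state_def by simp
  have mN: "1 \<le> m" "m < N" using m N2 by auto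
  have wf: "w = fst s ! (m - 1)" unfolding w_def pos_def by simp
  have capC: "C" if "fst q = ((fst s)[N-1 := y])[m-1 := z]" "is_capture N q" "z \<in> cnbhd E w" for q z
    using capt_analysis[OF that(1) len m that(2)] that(3) unfolding C_def by blast
  define Q where "Q i = (C \<or> (\<exists>z\<in>cnbhd E w. \<exists>q. q \<in> Att E N {m} (n - i) \<and> turn q = i \<and>
        fst q = ((fst s)[N-1 := y])[m-1 := z] \<and> (i \<le> m \<longrightarrow> z = w) \<and> \<not> is_capture N q))" for i
  have n0: "n \<noteq> 0" using sA nc by (cases n) auto
  have Qi: "1 \<le> i \<Longrightarrow> i \<le> N \<Longrightarrow> Q i" for i
  proof (induction i)
    case 0 then show ?case by simp
  next
    case (Suc i)
    show ?case
    proof (cases "i = 0")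
      case True
      let ?q = "move N s y"
      have tq: "turn ?q = 1" using ts by (simp add: nxt_def)
      have qA: "?q \<in> Att E N {m} (n - 1)"
        using Att_nK_down[of s E N "{m}" "n - 1" y] sA n0 nc ts y mN by simp
      have fq: "fst ?q = ((fst s)[N-1 := y])[m-1 := w]"
      proof -
        have "(fst s)[N-1 := y] ! (m-1) = w" using wf len mN by (simp add: nth_list_update)
        then have "((fst s)[N-1 := y])[m-1 := w] = (fst s)[N-1 := y]" by (metis list_update_id)
        then show ?thesis using ts by (simp add: fst_move)
      qed
      have wcn: "w \<in> cnbhd E w" by (rule cnbhd_self)
      show ?thesis
      proof (cases "is_capture N ?q")
        case c: True
        then show ?thesis unfolding Q_def using capC[OF fq c wcn] by blast
      next
        case c: False
        have "\<exists>z\<in>cnbhd E w. \<exists>q. q \<in> Att E N {m} (n - Suc i) \<and> turn q = Suc i \<and>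
          fst q = ((fst s)[N-1 := y])[m-1 := z] \<and> (Suc i \<le> m \<longrightarrow> z = w) \<and> \<not> is_capture N q"
          by (rule bexI[of _ w], rule exI[of _ ?q]) (use qA tq fq c True wcn in auto)
        then show ?thesis unfolding Q_def by blast
      qed
    next
      case False
      then have "Q i" using Suc by simp
      show ?thesis
      proof (cases C)
        case True then show ?thesis unfolding Q_def by blast
      next
        case nC: False
        then obtain z q where z: "z \<in> cnbhd E w" and qA: "q \<in> Att E N {m} (n - i)" and tq: "turn q = i"
          and fq: "fst q = ((fst s)[N-1 := y])[m-1 := z]" and zw: "i \<le> m \<longrightarrow> z = w" and qnc: "\<not> is_capture N q"
          using \<open>Q i\<close> unfolding Q_def by blast
        have "n - i \<noteq> 0" using qA qnc by (cases "n - i") auto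
        then obtain k where k: "n - i = Suc k" using not0_implies_Suc by blast
        have k': "n - Suc i = k" using k by simp
        have iN: "1 \<le> i" "i < N" using Suc False by auto
        have tn: "nxt N i = Suc i" using iN unfolding nxt_def by simp
        have qlen: "length (fst q) = N" using fq len by simp
        show ?thesis
        proof (cases "i = m")
          case True
          have qA': "q \<in> Att E N {m} (Suc k)" using qA k by simp
          obtain z' where z': "z' \<in> cnbhd E (pos q (turn q))" "move N q z' \<in> Att E N {m} k"
            using Att_K_down[OF qA' qnc] tq True by auto
          have "pos q (turn q) = z" using tq True fq len mN unfolding pos_def by (simp add: nth_list_update)
          then have z'w: "z' \<in> cnbhd E w" using z' zw True by simp
          have fq': "fst (move N q z') = ((fst s)[N-1 := y])[m-1 := z']" using fq tq True by (simp add: fst_move)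
          have "\<not> is_capture N (move N q z')" using capC[OF fq' _ z'w] nC by blast
          moreover have "turn (move N q z') = Suc i" using tq tn by simp
          moreover have "move N q z' \<in> Att E N {m} (n - Suc i)" using z'(2) k' by simp
          ultimately have "\<exists>z\<in>cnbhd E w. \<exists>q. q \<in> Att E N {m} (n - Suc i) \<and> turn q = Suc i \<and>
            fst q = ((fst s)[N-1 := y])[m-1 := z] \<and> (Suc i \<le> m \<longrightarrow> z = w) \<and> \<not> is_capture N q"
            using True z'w fq' by (intro bexI[of _ z'] exI[of _ "move N q z'"]) auto
          then show ?thesis unfolding Q_def by blast
        next
          case False
          let ?q' = "move N q (pos q i)"
          have qA': "q \<in> Att E N {m} (Suc k)" using qA k by simp
          have "?q' \<in> Att E N {m} k"
            using Att_nK_down[OF qA' qnc] tq False cnbhd_self[of "pos q i" E] by simp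
          moreover have fq': "fst ?q' = fst q"
            using tq unfolding fst_move pos_def by simp
          moreover have "\<not> is_capture N ?q'" using cap_fst[OF fq'] qnc by simp
          moreover have "turn ?q' = Suc i" using tq tn by simp
          ultimately have "\<exists>z\<in>cnbhd E w. \<exists>q. q \<in> Att E N {m} (n - Suc i) \<and> turn q = Suc i \<and>
            fst q = ((fst s)[N-1 := y])[m-1 := z] \<and> (Suc i \<le> m \<longrightarrow> z = w) \<and> \<not> is_capture N q"
            using z fq k' zw by (intro bexI[of _ z] exI[of _ ?q']) auto
          then show ?thesis unfolding Q_def by blast
        qed
      qed
    qed
  qed
  have "Q N" using Qi N2 by simp
  then show ?thesis
  proof (cases C)
    case True then show ?thesis unfolding C_def w_def by blast
  next
    case False
    then obtain z q where z: "z \<in> cnbhd E w" and qA: "q \<in> Att E N {m} (n - N)" and tq: "turn q = N"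
      and fq: "fst q = ((fst s)[N-1 := y])[m-1 := z]" and qnc: "\<not> is_capture N q"
      using \<open>Q N\<close> unfolding Q_def by blast
    have wV: "w \<in> V" using valid_pos[OF v] mN w_def by simp
    have uV: "pos s N \<in> V" using valid_pos[OF v] N2 by simp
    have zV: "z \<in> V" using cnbhd_V[OF G wV] z by blast
    have yV: "y \<in> V" using cnbhd_V[OF G uV] y by blast
    have "set (fst q) \<subseteq> V"
    proof -
      have "set (fst q) \<subseteq> insert z (set ((fst s)[N-1 := y]))" using fq set_update_subset_insert by metis
      also have "\<dots> \<subseteq> insert z (insert y (set (fst s)))" using set_update_subset_insert by fast
      finally show ?thesis using v zV yV unfolding valid_state_def by auto
    qed
    then have vq: "valid_state V N q" using fq len tq N2 unfolding valid_state_def turn_def by simp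
    have "pos q N = y" using fq len mN unfolding pos_def by (simp add: nth_list_update)
    then show ?thesis using qA vq tq qnc by blast
  qed
qed


definition mkst :: "nat \<Rightarrow> nat \<Rightarrow> 'v \<Rightarrow> 'v \<Rightarrow> 'v \<Rightarrow> 'v state" where
  "mkst N m w u v = (map (\<lambda>i. if i = m - 1 then w else if i = N - 1 then u else v) [0..<N], N)"

lemma mkst_pos: "i \<in> {1..N} \<Longrightarrow> m \<in> {1..N-1} \<Longrightarrow>
   pos (mkst N m w u v) i = (if i = m then w else if i = N then u else v)"
  unfolding mkst_def pos_def by auto

lemma mkst_turn: "turn (mkst N m w u v) = N" unfolding mkst_def turn_def by simp

lemma mkst_valid: "1 \<le> N \<Longrightarrow> w \<in> V \<Longrightarrow> u \<in> V \<Longrightarrow> v \<in> V \<Longrightarrow> valid_state V N (mkst N m w u v)"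
  unfolding mkst_def valid_state_def by auto

lemma mkst_nc: "m \<in> {1..N-1} \<Longrightarrow> w \<noteq> u \<Longrightarrow> v \<noteq> u \<Longrightarrow> \<not> is_capture N (mkst N m w u v)"
proof
  assume m: "m \<in> {1..N-1}" and wu: "w \<noteq> u" and vu: "v \<noteq> u" and c: "is_capture N (mkst N m w u v)"
  obtain i where i: "i \<in> {1..N-1}" "pos (mkst N m w u v) i = pos (mkst N m w u v) N"
    using c unfolding is_capture_def by blast
  have N1: "N \<in> {1..N}" "N \<noteq> m" using m by auto
  have pN: "pos (mkst N m w u v) N = u" using mkst_pos[OF N1(1) m, of w u v] N1(2) by simp
  have i1: "i \<in> {1..N}" "i \<noteq> N" using i(1) by auto
  have "pos (mkst N m w u v) i = (if i = m then w else v)" using mkst_pos[OF i1(1) m, of w u v] i1(2) by simp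
  then show False using i(2) pN wu vu by (auto split: if_splits)
qed

lemma irrefl: "simple_conn_graph V E \<Longrightarrow> E a b \<Longrightarrow> a \<noteq> b"
  unfolding simple_conn_graph_def by blast

lemma edgeV: "simple_conn_graph V E \<Longrightarrow> E a b \<Longrightarrow> a \<in> V \<and> b \<in> V"
  unfolding simple_conn_graph_def by blast

lemma forward:
  assumes G: "simple_conn_graph V E" and N3: "3 \<le> N" and g: "0 < \<gamma>" "\<gamma> < 1"
    and G3: "in_G3 V E N \<gamma>"
    and s0: "s0 \<in> S_turn V N N \<inter> S_nc V N" and nl: "\<not> is_leaf E (pos s0 N)"
    and fin0: "state_cop_num V E N s0 \<noteq> \<infinity>"
  shows False
proof -
  have N2: "2 \<le> N" using N3 by simp
  have fin: "\<forall>x. finite (cnbhd E x)" using fin_cnbhd[OF G] by blast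
  have sym: "\<And>a b. E a b \<Longrightarrow> E b a" using G unfolding simple_conn_graph_def by blast
  have nG1: "\<not> in_G1 V E N" and inG: "in_G V E N"
    using G3 unfolding in_G3_def in_G2'_def in_G1'_def by blast+
  have noint: "\<forall>s\<in>S_nc V N. state_cop_num V E N s \<notin> enat ` {2..N-1}" using nG1 inG unfolding in_G1_def by blast
  have s0nc: "s0 \<in> S_nc V N" using s0 by blast
  have ex: "\<exists>k. k_cops_force V E N s0 k" using fin0 unfolding state_cop_num_def by (auto split: if_splits)
  define k0 where "k0 = (LEAST k. k_cops_force V E N s0 k)"
  have kk: "k_cops_force V E N s0 k0" using LeastI_ex[OF ex] k0_def by simp
  have cs0: "state_cop_num V E N s0 = enat k0" using ex k0_def unfolding state_cop_num_def by simp
  have "k0 \<in> {1..N-1}" using kk unfolding k_cops_force_def by blast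
  moreover have "k0 \<notin> {2..N-1}" using noint s0nc cs0 by auto
  ultimately have "k0 = 1" by auto
  then obtain K where K: "K \<subseteq> {1..N-1}" "card K = 1" "can_force V E N s0 K" using kk unfolding k_cops_force_def by blast
  then obtain m0 where m0: "K = {m0}" using card_1_singletonE by blast
  have m0r: "m0 \<in> {1..N-1}" using K m0 by simp
  obtain n1 where n1: "s0 \<in> Att E N {m0} n1" using force_Att[OF fin] K(3) m0 by blast
  \<comment> \<open>minimal counterexample\<close>
  define P where "P n = (\<exists>s m. s \<in> S_turn V N N \<inter> S_nc V N \<and> \<not> is_leaf E (pos s N) \<and>
      m \<in> {1..N-1} \<and> s \<in> Att E N {m} n)" for n
  have Pn1: "P n1" unfolding P_def using s0 nl m0r n1 by blast
  define n0 where "n0 = (LEAST n. P n)"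
  have Pn0: "P n0" using LeastI[of P n1] Pn1 n0_def by simp
  have minP: "\<And>n. n < n0 \<Longrightarrow> \<not> P n" using not_less_Least n0_def by blast
  obtain s m where sS: "s \<in> S_turn V N N \<inter> S_nc V N" and nls: "\<not> is_leaf E (pos s N)"
    and m: "m \<in> {1..N-1}" and sA: "s \<in> Att E N {m} n0" using Pn0 unfolding P_def by blast
  have v: "valid_state V N s" and ts: "turn s = N" and nc: "\<not> is_capture N s"
    using sS unfolding S_turn_def S_nc_def by auto
  define u where "u = pos s N"
  define w where "w = pos s m"
  have n0p: "0 < n0" using sA nc by (cases n0) auto
  have struc: "y \<in> cnbhd E w \<or> (\<exists>j\<in>{1..N-1}. pos s j = y) \<or> is_leaf E y" if y: "y \<in> cnbhd E u" for y
  proof -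
    have "y \<in> cnbhd E w \<or> (\<exists>j\<in>{1..N-1}. pos s j = y) \<or>
      (\<exists>q. q \<in> Att E N {m} (n0 - N) \<and> valid_state V N q \<and> turn q = N \<and> \<not> is_capture N q \<and> pos q N = y)"
      using round[OF G N2 m v ts nc sA] y u_def w_def by blast
    moreover have "\<not> (\<exists>q. q \<in> Att E N {m} (n0 - N) \<and> valid_state V N q \<and> turn q = N \<and> \<not> is_capture N q \<and> pos q N = y \<and> \<not> is_leaf E y)"
    proof
      assume "\<exists>q. q \<in> Att E N {m} (n0 - N) \<and> valid_state V N q \<and> turn q = N \<and> \<not> is_capture N q \<and> pos q N = y \<and> \<not> is_leaf E y"
      then have "P (n0 - N)" unfolding P_def S_turn_def S_nc_def using m by blast
      moreover have "n0 - N < n0" using n0p N2 by simp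
      ultimately show False using minP by blast
    qed
    ultimately show ?thesis by blast
  qed
  have uV: "u \<in> V" using valid_pos[OF v] N2 u_def by simp
  have wV: "w \<in> V" using valid_pos[OF v] m w_def by auto
  have wu: "w \<noteq> u" using nc capI[OF m] u_def w_def by metis
  have Ewu: "E w u"
  proof -
    have "u \<in> cnbhd E u" by (rule cnbhd_self)
    moreover have "\<not> (\<exists>j\<in>{1..N-1}. pos s j = u)" using nc capI u_def by metis
    ultimately have "u \<in> cnbhd E w" using struc nls u_def by blast
    then show ?thesis using wu unfolding cnbhd_def by simp
  qed
  have th: "trap_hyp V E N m s u w" unfolding trap_hyp_def using G N2 m v ts u_def w_def Ewu struc by blast
  obtain vv where Evv: "E u vv" and vvw: "vv \<noteq> w"
  proof -
    have fs: "finite {x. E u x}" using fin[rule_format, of u] unfolding cnbhd_def by simp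
    have wi: "w \<in> {x. E u x}" using sym[OF Ewu] by simp
    have "card {x. E u x} \<noteq> 1" using nls u_def unfolding is_leaf_def by simp
    then have "{x. E u x} \<noteq> {w}" by auto
    then obtain x where "E u x" "x \<noteq> w" using wi by blast
    then show ?thesis using that by blast
  qed
  show False
  proof (cases "\<exists>j\<in>{1..N-1}. \<exists>v'. pos s j = v' \<and> E u v' \<and> v' \<noteq> w")
    case True
    then obtain j v' where j: "j \<in> {1..N-1}" "pos s j = v'" "E u v'" "v' \<noteq> w" by blast
    show False using G3_contra[OF th nc j(1,2,3,4) g G3] .
  next
    case False
    define s' where "s' = mkst N m w u vv"
    define j where "j = (if m = 1 then 2 else (1::nat))"
    have j: "j \<in> {1..N-1}" "j \<noteq> m" using N3 m unfolding j_def by auto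
    have vvV: "vv \<in> V" using edgeV[OF G Evv] by simp
    have vu: "vv \<noteq> u" using irrefl[OF G Evv] by simp
    have v': "valid_state V N s'" using mkst_valid[OF _ wV uV vvV] N2 s'_def by simp
    have nc': "\<not> is_capture N s'" using mkst_nc[OF m wu vu] s'_def by simp
    have mr: "m \<in> {1..N}" "N \<in> {1..N}" "j \<in> {1..N}" using m j N2 by auto
    have Nm: "N \<noteq> m" using m N2 by auto
    have pN: "pos s' N = u" using mkst_pos[OF mr(2) m, of w u vv] Nm s'_def by simp
    have pm: "pos s' m = w" using mkst_pos[OF mr(1) m] s'_def by simp
    have jN: "j \<noteq> N" using j by auto
    have pj: "pos s' j = vv" using mkst_pos[OF mr(3) m, of w u vv] j(2) jN s'_def by simp
    have hyp': "\<forall>y\<in>cnbhd E u. y \<in> cnbhd E w \<or> (\<exists>j\<in>{1..N-1}. pos s' j = y) \<or> is_leaf E y"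
    proof
      fix y assume y: "y \<in> cnbhd E u"
      show "y \<in> cnbhd E w \<or> (\<exists>j\<in>{1..N-1}. pos s' j = y) \<or> is_leaf E y"
      proof (cases "\<exists>j\<in>{1..N-1}. pos s j = y")
        case True
        then obtain i where i: "i \<in> {1..N-1}" "pos s i = y" by blast
        have "y \<noteq> u" using nc capI[OF i(1)] i(2) u_def by metis
        then have "E u y" using y unfolding cnbhd_def by simp
        then have "y = w" using False i by blast
        then show ?thesis using cnbhd_self[of w E] by blast
      next
        case False
        then show ?thesis using struc[OF y] by blast
      qed
    qed
    have ts': "turn s' = N" using mkst_turn s'_def by metis
    have th': "trap_hyp V E N m s' u w" unfolding trap_hyp_def
      using G N2 m v' pN pm Ewu hyp' ts' by blast
    show False using G3_contra[OF th' nc' j(1) pj Evv vvw g G3] .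
  qed
qed

theorem mainTheorem15:
  fixes V :: "'v set" and E :: "'v \<Rightarrow> 'v \<Rightarrow> bool" and N :: nat and \<gamma> :: real and u :: 'v
  assumes "simple_conn_graph V E"
    and "N \<ge> 3"
    and "0 < \<gamma>" and "\<gamma> < 1"
    and "in_G3 V E N \<gamma>"
    and "u \<in> V"
  shows "\<not> is_leaf E u \<longleftrightarrow>
           (\<forall>s \<in> S_turn V N N \<inter> S_nc V N. pos s N = u \<longrightarrow> state_cop_num V E N s = \<infinity>)"
proof
  assume nl: "\<not> is_leaf E u"
  show "\<forall>s \<in> S_turn V N N \<inter> S_nc V N. pos s N = u \<longrightarrow> state_cop_num V E N s = \<infinity>"
  proof (intro ballI impI)
    fix s assume s: "s \<in> S_turn V N N \<inter> S_nc V N" and pu: "pos s N = u"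
    show "state_cop_num V E N s = \<infinity>"
    proof (rule ccontr)
      assume "state_cop_num V E N s \<noteq> \<infinity>"
      then show False using forward[OF assms(1,2,3,4,5) s] nl pu by simp
    qed
  qed
next
  assume all: "\<forall>s \<in> S_turn V N N \<inter> S_nc V N. pos s N = u \<longrightarrow> state_cop_num V E N s = \<infinity>"
  show "\<not> is_leaf E u"
  proof
    assume l: "is_leaf E u"
    have G: "simple_conn_graph V E" using assms(1) .
    have N2: "2 \<le> N" using assms(2) by simp
    have sym: "\<And>a b. E a b \<Longrightarrow> E b a" using G unfolding simple_conn_graph_def by blast
    have "card {v. E u v} = 1" using l unfolding is_leaf_def by simp
    then obtain w where w: "{v. E u v} = {w}" using card_1_singletonE by blast
    then have Euw: "E u w" by auto
    have Ewu: "E w u" using sym[OF Euw] .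
    have wV: "w \<in> V" using edgeV[OF G Euw] by simp
    have wu: "w \<noteq> u" using irrefl[OF G Euw] by simp
    have m1: "(1::nat) \<in> {1..N-1}" using N2 by simp
    define s where "s = mkst N 1 w u w"
    have v: "valid_state V N s" using mkst_valid[OF _ wV assms(6) wV] N2 s_def by simp
    have nc: "\<not> is_capture N s" using mkst_nc[OF m1 wu wu] s_def by simp
    have mr: "(1::nat) \<in> {1..N}" "N \<in> {1..N}" using N2 by auto
    have N1: "N \<noteq> 1" using N2 by simp
    have pN: "pos s N = u" using mkst_pos[OF mr(2) m1, of w u w] N1 s_def by simp
    have p1: "pos s 1 = w" using mkst_pos[OF mr(1) m1] s_def by simp
    have cu: "cnbhd E u = {u, w}" using w unfolding cnbhd_def by auto
    have hyp: "\<forall>y\<in>cnbhd E u. y \<in> cnbhd E w \<or> (\<exists>j\<in>{1..N-1}. pos s j = y) \<or> is_leaf E y"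
      using cu Ewu cnbhd_self[of w E] unfolding cnbhd_def by auto
    have ts: "turn s = N" using mkst_turn s_def by metis
    have th: "trap_hyp V E N 1 s u w" unfolding trap_hyp_def
      using G N2 m1 v pN p1 Ewu hyp ts by blast
    have "state_cop_num V E N s = 1" using force_one[OF force_trap[OF th] m1] .
    moreover have "s \<in> S_turn V N N \<inter> S_nc V N" using v nc ts unfolding S_turn_def S_nc_def by simp
    ultimately show False using all pN by (simp add: one_enat_def)
  qed
qed

end
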